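(* Let $\mathbb{A}$ be a 2-category and $p:e\to b$ a 1-cell such that $\mathbb{A}$ has the two-dimensional cokernel diagram of $p$, a right Kan extension $(t,\gamma)$ of $p$ along $p$ exists, and it is preserved by $\delta^0:b\to b\uparrow_pb$. Let $\mathsf{T}$ be the codensity monad of $p$. Then $\mathbb{A}$ has an Eilenberg–Moore object of $\mathsf{T}$ if and only if $\mathbb{A}$ has a lax descent object of the two-dimensional cokernel diagram of $p$, and in that case the semantic factorization $p=u\,p^{\mathsf{T}}$ of $p$ is isomorphic to the semantic lax descent factorization $p=d\,p^{H}$ of $p$, i.e. there is an isomorphism $\varphi:L\to b^{\mathsf{T}}$ with $u\varphi=d$ and $\varphi p^H=p^{\mathsf{T}}$.
   Context: A 2-category is a $\mathbf{Cat}$-enriched category; composition of 1-cells is juxtaposition, vertical composition of 2-cells is $\cdot$, horizontal composition is $\ast$, $\mathrm{id}_f$ is the identity 2-cell on $f$. Opcomma object of $p$ along itself: an object $b\uparrow_p b$ with 1-cells $\delta^0,\delta^1:b\to b\uparrow_p b$ and a 2-cell $\alpha:\delta^1p\Rightarrow\delta^0p$ such that for every object $y$ the functor $h\mapsto(h\delta^0,h\delta^1,\mathrm{id}_h\ast\alpha)$, $\xi\mapsto(\xi\ast\mathrm{id}_{\delta^0},\xi\ast\mathrm{id}_{\delta^1})$ is an isomorphism from $\mathbb{A}(b\uparrow_p b,y)$ onto the category of triples $(h_0,h_1:b\to y,\ \beta:h_1p\Rightarrow h_0p)$ with morphisms pairs of 2-cells $(\xi_0:h_0\Rightarrow h_0',\xi_1:h_1\Rightarrow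 h_1')$ satisfying $(\xi_0\ast\mathrm{id}_p)\cdot\beta=\beta'\cdot(\xi_1\ast\mathrm{id}_p)$. Two-dimensional pushout of a span $f_0:c\to c_0$, $f_1:c\to c_1$: an object $P$ with $q_0:c_0\to P$, $q_1:c_1\to P$, $q_0f_0=q_1f_1$, such that for every $y$, $k\mapsto(kq_0,kq_1)$ is an isomorphism from $\mathbb{A}(P,y)$ onto the category of pairs $(k_0,k_1)$ with $k_0f_0=k_1f_1$, whose morphisms are pairs of 2-cells $(\xi_0,\xi_1)$ with $\xi_0\ast\mathrm{id}_{f_0}=\xi_1\ast\mathrm{id}_{f_1}$. $\mathbb{A}$ has the two-dimensional cokernel diagram of $p$ if it has an opcomma object $b\uparrow_p b$ and a two-dimensional pushout $b\uparrow_pb\uparrow_pb$ of the span $(\delta^0,\delta^1)$, with 1-cells $D^0,D^2$ satisfying $D^2\delta^0=D^0\delta^1$; $D^1$ is the unique 1-cell with $D^1\delta^1=D^2\delta^1$, $D^1\delta^0=D^0\delta^0$, $\mathrm{id}_{D^1}\ast\alpha=(\mathrm{id}_{D^0}\ast\alpha)\cdot(\mathrm{id}_{D^2}\ast\alpha)$; $s^0:b\uparrow_pb\to b$ is the unique 1-cell with $s^0\delta^0=s^0\delta^1=\mathrm{id}_b$, $\mathrm{id}_{s^0}\ast\alpha=\mathrm{id}_p$. The two-dimensional cokernel diagram of $p$ is the diagram formed by $b,b\uparrow_pb,b\uparrow_pb\uparrow_pb$ and $\delta^0,\delta^1,s^0,D^0,D^1,D^2$. Lax descent object: for an object $y$,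 $\mathrm{Desc}_p(y)$ has objects pairs $(h:y\to b,\beta:\delta^1h\Rightarrow\delta^0h)$ with $(\mathrm{id}_{D^0}\ast\beta)\cdot(\mathrm{id}_{D^2}\ast\beta)=\mathrm{id}_{D^1}\ast\beta$ and $\mathrm{id}_{s^0}\ast\beta=\mathrm{id}_h$, and morphisms $(h_1,\beta_1)\to(h_0,\beta_0)$ the 2-cells $\xi:h_1\Rightarrow h_0$ with $\beta_0\cdot(\mathrm{id}_{\delta^1}\ast\xi)=(\mathrm{id}_{\delta^0}\ast\xi)\cdot\beta_1$. A lax descent object of the two-dimensional cokernel diagram is an object $L$ with $d:L\to b$ and $\Psi:\delta^1d\Rightarrow\delta^0d$ such that for each $y$ the functor $g\mapsto(dg,\Psi\ast\mathrm{id}_g)$, $\xi\mapsto\mathrm{id}_d\ast\xi$ is an isomorphism $\mathbb{A}(y,L)\to\mathrm{Desc}_p(y)$. Since $(p,\alpha)\in\mathrm{Desc}_p(e)$, there is a unique $p^H:e\to L$ with $dp^H=p$ and $\Psi\ast\mathrm{id}_{p^H}=\alpha$; $p=d\,p^H$ is the semantic lax descent factorization of $p$. Right Kan extension of $f:z\to y$ along $g:z\to w$: a pair $(r,\gamma:rg\Rightarrow f)$ such that for each $k:w\to y$, $\beta\mapsto\gamma\cdot(\beta\ast\mathrm{id}_g)$ is a bijection from 2-cells $k\Rightarrow r$ to 2-cells $kg\Rightarrow f$; a 1-cell $\delta$ preserves it if $(\delta r,\mathrm{id}_\delta\ast\gamma)$ is a right Kan extension of $\delta f$ along $g$. Codensity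 monad $\mathsf{T}=(b,t,m,\eta)$: $m:tt\Rightarrow t$ unique with $\gamma\cdot(m\ast\mathrm{id}_p)=\gamma\cdot(\mathrm{id}_t\ast\gamma)$, $\eta:\mathrm{id}_b\Rightarrow t$ unique with $\gamma\cdot(\eta\ast\mathrm{id}_p)=\mathrm{id}_p$. Eilenberg–Moore object: for $y$, $\mathrm{Alg}_{\mathsf{T}}(y)$ has objects $(h:y\to b,\beta:th\Rightarrow h)$ with $\beta\cdot(\mathrm{id}_t\ast\beta)=\beta\cdot(m\ast\mathrm{id}_h)$, $\beta\cdot(\eta\ast\mathrm{id}_h)=\mathrm{id}_h$, morphisms 2-cells $\xi:h_1\Rightarrow h_0$ with $\xi\cdot\beta_1=\beta_0\cdot(\mathrm{id}_t\ast\xi)$. An Eilenberg–Moore object is $b^{\mathsf{T}}$ with $u:b^{\mathsf{T}}\to b$, $\mu:tu\Rightarrow u$ such that $g\mapsto(ug,\mu\ast\mathrm{id}_g)$, $\xi\mapsto\mathrm{id}_u\ast\xi$ is an isomorphism $\mathbb{A}(y,b^{\mathsf{T}})\to\mathrm{Alg}_{\mathsf{T}}(y)$ for each $y$. The semantic factorization of $p$ is $p=u\,p^{\mathsf{T}}$ with $p^{\mathsf{T}}:e\to b^{\mathsf{T}}$ the unique 1-cell with $up^{\mathsf{T}}=p$ and $\mu\ast\mathrm{id}_{p^{\mathsf{T}}}=\gamma$. *)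

theory Defs
  imports Main
begin

text \<open>Objects live in type 'o, 1-cells in 'a, 2-cells in 'c.  comp1 g f is the
composite "g f" (first f, then g), hcomp is horizontal composition (same order),
vcomp beta alpha is vertical composition (first alpha, then beta).\<close>

record ('o, 'a, 'c) two_cat =
  obj    :: "'o set"
  arr1   :: "'a set"
  arr2   :: "'c set"
  src1   :: "'a \<Rightarrow> 'o"
  tgt1   :: "'a \<Rightarrow> 'o"
  src2   :: "'c \<Rightarrow> 'a"
  tgt2   :: "'c \<Rightarrow> 'a"
  comp1  :: "'a \<Rightarrow> 'a \<Rightarrow> 'a"
  ident1 :: "'o \<Rightarrow> 'a"
  vcomp  :: "'c \<Rightarrow> 'c \<Rightarrow> 'c"
  hcomp  :: "'c \<Rightarrow> 'c \<Rightarrow> 'c"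
  ident2 :: "'a \<Rightarrow> 'c"

definition Hom :: "('o, 'a, 'c, 'z) two_cat_scheme \<Rightarrow> 'o \<Rightarrow> 'o \<Rightarrow> 'a set" where
  "Hom A x y = {f \<in> arr1 A. src1 A f = x \<and> tgt1 A f = y}"

definition Cell :: "('o, 'a, 'c, 'z) two_cat_scheme \<Rightarrow> 'a \<Rightarrow> 'a \<Rightarrow> 'c set" where
  "Cell A f g = {\<alpha> \<in> arr2 A. src2 A \<alpha> = f \<and> tgt2 A \<alpha> = g}"

definition two_category :: "('o, 'a, 'c, 'z) two_cat_scheme \<Rightarrow> bool" where
  "two_category A \<longleftrightarrow>
     \<comment> \<open>underlying category of objects and 1-cells\<close>
     (\<forall>f \<in> arr1 A. src1 A f \<in> obj A \<and> tgt1 A f \<in> obj A) \<and>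
     (\<forall>x \<in> obj A. ident1 A x \<in> Hom A x x) \<and>
     (\<forall>f \<in> arr1 A. \<forall>g \<in> arr1 A. tgt1 A f = src1 A g \<longrightarrow>
          comp1 A g f \<in> Hom A (src1 A f) (tgt1 A g)) \<and>
     (\<forall>f \<in> arr1 A. \<forall>g \<in> arr1 A. \<forall>h \<in> arr1 A.
          tgt1 A f = src1 A g \<longrightarrow> tgt1 A g = src1 A h \<longrightarrow>
          comp1 A h (comp1 A g f) = comp1 A (comp1 A h g) f) \<and>
     (\<forall>f \<in> arr1 A. comp1 A (ident1 A (tgt1 A f)) f = f \<and>
                    comp1 A f (ident1 A (src1 A f)) = f) \<and>
     \<comment> \<open>2-cells between parallel 1-cells\<close>
     (\<forall>\<alpha> \<in> arr2 A. src2 A \<alpha> \<in> arr1 A \<and> tgt2 A \<alpha> \<in> arr1 A \<and>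
          src1 A (src2 A \<alpha>) = src1 A (tgt2 A \<alpha>) \<and>
          tgt1 A (src2 A \<alpha>) = tgt1 A (tgt2 A \<alpha>)) \<and>
     \<comment> \<open>hom-categories: vertical composition\<close>
     (\<forall>f \<in> arr1 A. ident2 A f \<in> Cell A f f) \<and>
     (\<forall>\<alpha> \<in> arr2 A. \<forall>\<beta> \<in> arr2 A. tgt2 A \<alpha> = src2 A \<beta> \<longrightarrow>
          vcomp A \<beta> \<alpha> \<in> Cell A (src2 A \<alpha>) (tgt2 A \<beta>)) \<and>
     (\<forall>\<alpha> \<in> arr2 A. \<forall>\<beta> \<in> arr2 A. \<forall>\<gamma> \<in> arr2 A.
          tgt2 A \<alpha> = src2 A \<beta> \<longrightarrow> tgt2 A \<beta> = src2 A \<gamma> \<longrightarrow>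
          vcomp A \<gamma> (vcomp A \<beta> \<alpha>) = vcomp A (vcomp A \<gamma> \<beta>) \<alpha>) \<and>
     (\<forall>\<alpha> \<in> arr2 A. vcomp A (ident2 A (tgt2 A \<alpha>)) \<alpha> = \<alpha> \<and>
                    vcomp A \<alpha> (ident2 A (src2 A \<alpha>)) = \<alpha>) \<and>
     \<comment> \<open>horizontal composition: a functor A(y,z) x A(x,y) -> A(x,z)\<close>
     (\<forall>\<alpha> \<in> arr2 A. \<forall>\<beta> \<in> arr2 A. tgt1 A (src2 A \<alpha>) = src1 A (src2 A \<beta>) \<longrightarrow>
          hcomp A \<beta> \<alpha> \<in> Cell A (comp1 A (src2 A \<beta>) (src2 A \<alpha>))
                                 (comp1 A (tgt2 A \<beta>) (tgt2 A \<alpha>))) \<and>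
     (\<forall>f \<in> arr1 A. \<forall>g \<in> arr1 A. tgt1 A f = src1 A g \<longrightarrow>
          hcomp A (ident2 A g) (ident2 A f) = ident2 A (comp1 A g f)) \<and>
     (\<forall>\<alpha> \<in> arr2 A. \<forall>\<alpha>' \<in> arr2 A. \<forall>\<beta> \<in> arr2 A. \<forall>\<beta>' \<in> arr2 A.
          tgt2 A \<alpha> = src2 A \<alpha>' \<longrightarrow> tgt2 A \<beta> = src2 A \<beta>' \<longrightarrow>
          tgt1 A (src2 A \<alpha>) = src1 A (src2 A \<beta>) \<longrightarrow>
          hcomp A (vcomp A \<beta>' \<beta>) (vcomp A \<alpha>' \<alpha>) =
          vcomp A (hcomp A \<beta>' \<alpha>') (hcomp A \<beta> \<alpha>)) \<and>
     \<comment> \<open>associativity and unit laws for horizontal composition\<close>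
     (\<forall>\<alpha> \<in> arr2 A. \<forall>\<beta> \<in> arr2 A. \<forall>\<gamma> \<in> arr2 A.
          tgt1 A (src2 A \<alpha>) = src1 A (src2 A \<beta>) \<longrightarrow>
          tgt1 A (src2 A \<beta>) = src1 A (src2 A \<gamma>) \<longrightarrow>
          hcomp A \<gamma> (hcomp A \<beta> \<alpha>) = hcomp A (hcomp A \<gamma> \<beta>) \<alpha>) \<and>
     (\<forall>\<alpha> \<in> arr2 A. hcomp A (ident2 A (ident1 A (tgt1 A (src2 A \<alpha>)))) \<alpha> = \<alpha> \<and>
                    hcomp A \<alpha> (ident2 A (ident1 A (src1 A (src2 A \<alpha>)))) = \<alpha>)"

text \<open>Isomorphism of categories: a functor (F0 on objects, F1 on morphisms) that is
bijective on objects and on each hom-set.  Categories are given by their object set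
and their hom-set function.\<close>

definition cat_iso ::
  "'x set \<Rightarrow> ('x \<Rightarrow> 'x \<Rightarrow> 'm set) \<Rightarrow> 'y set \<Rightarrow> ('y \<Rightarrow> 'y \<Rightarrow> 'n set)
   \<Rightarrow> ('x \<Rightarrow> 'y) \<Rightarrow> ('m \<Rightarrow> 'n) \<Rightarrow> bool" where
  "cat_iso O1 H1 O2 H2 F0 F1 \<longleftrightarrow>
     bij_betw F0 O1 O2 \<and>
     (\<forall>X \<in> O1. \<forall>X' \<in> O1. bij_betw F1 (H1 X X') (H2 (F0 X) (F0 X')))"

definition iso1 :: "('o, 'a, 'c, 'z) two_cat_scheme \<Rightarrow> 'a \<Rightarrow> 'o \<Rightarrow> 'o \<Rightarrow> bool" where
  "iso1 A \<phi> x y \<longleftrightarrow> \<phi> \<in> Hom A x y \<and>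
     (\<exists>\<psi> \<in> Hom A y x. comp1 A \<psi> \<phi> = ident1 A x \<and> comp1 A \<phi> \<psi> = ident1 A y)"

definition opc_obj :: "('o, 'a, 'c, 'z) two_cat_scheme \<Rightarrow> 'a \<Rightarrow> 'o \<Rightarrow> ('a \<times> 'a \<times> 'c) set" where
  "opc_obj A p y = {(h0, h1, \<beta>). h0 \<in> Hom A (tgt1 A p) y \<and> h1 \<in> Hom A (tgt1 A p) y \<and>
                       \<beta> \<in> Cell A (comp1 A h1 p) (comp1 A h0 p)}"

definition opc_mor :: "('o, 'a, 'c, 'z) two_cat_scheme \<Rightarrow> 'a
    \<Rightarrow> ('a \<times> 'a \<times> 'c) \<Rightarrow> ('a \<times> 'a \<times> 'c) \<Rightarrow> ('c \<times> 'c) set" where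
  "opc_mor A p X X' = (case X of (h0, h1, \<beta>) \<Rightarrow> case X' of (h0', h1', \<beta>') \<Rightarrow>
     {(\<xi>0, \<xi>1). \<xi>0 \<in> Cell A h0 h0' \<and> \<xi>1 \<in> Cell A h1 h1' \<and>
        vcomp A (hcomp A \<xi>0 (ident2 A p)) \<beta> = vcomp A \<beta>' (hcomp A \<xi>1 (ident2 A p))})"

definition is_opcomma :: "('o, 'a, 'c, 'z) two_cat_scheme \<Rightarrow> 'a \<Rightarrow> 'o \<Rightarrow> 'a \<Rightarrow> 'a \<Rightarrow> 'c \<Rightarrow> bool" where
  "is_opcomma A p C \<delta>0 \<delta>1 \<alpha> \<longleftrightarrow>
     C \<in> obj A \<and> \<delta>0 \<in> Hom A (tgt1 A p) C \<and> \<delta>1 \<in> Hom A (tgt1 A p) C \<and>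
     \<alpha> \<in> Cell A (comp1 A \<delta>1 p) (comp1 A \<delta>0 p) \<and>
     (\<forall>y \<in> obj A. cat_iso (Hom A C y) (Cell A) (opc_obj A p y) (opc_mor A p)
        (\<lambda>h. (comp1 A h \<delta>0, comp1 A h \<delta>1, hcomp A (ident2 A h) \<alpha>))
        (\<lambda>\<xi>. (hcomp A \<xi> (ident2 A \<delta>0), hcomp A \<xi> (ident2 A \<delta>1))))"

definition po_obj :: "('o, 'a, 'c, 'z) two_cat_scheme \<Rightarrow> 'a \<Rightarrow> 'a \<Rightarrow> 'o \<Rightarrow> ('a \<times> 'a) set" where
  "po_obj A f0 f1 y = {(k0, k1). k0 \<in> Hom A (tgt1 A f0) y \<and> k1 \<in> Hom A (tgt1 A f1) y \<and>
                          comp1 A k0 f0 = comp1 A k1 f1}"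

definition po_mor :: "('o, 'a, 'c, 'z) two_cat_scheme \<Rightarrow> 'a \<Rightarrow> 'a
    \<Rightarrow> ('a \<times> 'a) \<Rightarrow> ('a \<times> 'a) \<Rightarrow> ('c \<times> 'c) set" where
  "po_mor A f0 f1 K K' = (case K of (k0, k1) \<Rightarrow> case K' of (k0', k1') \<Rightarrow>
     {(\<xi>0, \<xi>1). \<xi>0 \<in> Cell A k0 k0' \<and> \<xi>1 \<in> Cell A k1 k1' \<and>
        hcomp A \<xi>0 (ident2 A f0) = hcomp A \<xi>1 (ident2 A f1)})"

definition is_2pushout :: "('o, 'a, 'c, 'z) two_cat_scheme \<Rightarrow> 'a \<Rightarrow> 'a \<Rightarrow> 'o \<Rightarrow> 'a \<Rightarrow> 'a \<Rightarrow> bool" where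
  "is_2pushout A f0 f1 P q0 q1 \<longleftrightarrow>
     f0 \<in> arr1 A \<and> f1 \<in> arr1 A \<and> src1 A f0 = src1 A f1 \<and>
     P \<in> obj A \<and> q0 \<in> Hom A (tgt1 A f0) P \<and> q1 \<in> Hom A (tgt1 A f1) P \<and>
     comp1 A q0 f0 = comp1 A q1 f1 \<and>
     (\<forall>y \<in> obj A. cat_iso (Hom A P y) (Cell A) (po_obj A f0 f1 y) (po_mor A f0 f1)
        (\<lambda>k. (comp1 A k q0, comp1 A k q1))
        (\<lambda>\<xi>. (hcomp A \<xi> (ident2 A q0), hcomp A \<xi> (ident2 A q1))))"

definition cokernel_diagram :: "('o, 'a, 'c, 'z) two_cat_scheme \<Rightarrow> 'a \<Rightarrow>
    'o \<Rightarrow> 'a \<Rightarrow> 'a \<Rightarrow> 'c \<Rightarrow> 'o \<Rightarrow> 'a \<Rightarrow> 'a \<Rightarrow> 'a \<Rightarrow> 'a \<Rightarrow> bool" where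
  "cokernel_diagram A p C \<delta>0 \<delta>1 \<alpha> P D0 D1 D2 s0 \<longleftrightarrow>
     is_opcomma A p C \<delta>0 \<delta>1 \<alpha> \<and>
     is_2pushout A \<delta>0 \<delta>1 P D2 D0 \<and>
     D1 \<in> Hom A C P \<and>
     comp1 A D1 \<delta>1 = comp1 A D2 \<delta>1 \<and> comp1 A D1 \<delta>0 = comp1 A D0 \<delta>0 \<and>
     hcomp A (ident2 A D1) \<alpha> = vcomp A (hcomp A (ident2 A D0) \<alpha>) (hcomp A (ident2 A D2) \<alpha>) \<and>
     s0 \<in> Hom A C (tgt1 A p) \<and>
     comp1 A s0 \<delta>0 = ident1 A (tgt1 A p) \<and> comp1 A s0 \<delta>1 = ident1 A (tgt1 A p) \<and>
     hcomp A (ident2 A s0) \<alpha> = ident2 A p"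

definition desc_obj :: "('o, 'a, 'c, 'z) two_cat_scheme \<Rightarrow> 'a \<Rightarrow> 'a \<Rightarrow> 'a \<Rightarrow>
    'a \<Rightarrow> 'a \<Rightarrow> 'a \<Rightarrow> 'a \<Rightarrow> 'o \<Rightarrow> ('a \<times> 'c) set" where
  "desc_obj A p \<delta>0 \<delta>1 D0 D1 D2 s0 y = {(h, \<beta>). h \<in> Hom A y (tgt1 A p) \<and>
       \<beta> \<in> Cell A (comp1 A \<delta>1 h) (comp1 A \<delta>0 h) \<and>
       vcomp A (hcomp A (ident2 A D0) \<beta>) (hcomp A (ident2 A D2) \<beta>) = hcomp A (ident2 A D1) \<beta> \<and>
       hcomp A (ident2 A s0) \<beta> = ident2 A h}"

text \<open>Morphisms (h1,beta1) -> (h0,beta0).\<close>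

definition desc_mor :: "('o, 'a, 'c, 'z) two_cat_scheme \<Rightarrow> 'a \<Rightarrow> 'a \<Rightarrow>
    ('a \<times> 'c) \<Rightarrow> ('a \<times> 'c) \<Rightarrow> 'c set" where
  "desc_mor A \<delta>0 \<delta>1 X1 X0 = (case X1 of (h1, \<beta>1) \<Rightarrow> case X0 of (h0, \<beta>0) \<Rightarrow>
     {\<xi> \<in> Cell A h1 h0. vcomp A \<beta>0 (hcomp A (ident2 A \<delta>1) \<xi>) = vcomp A (hcomp A (ident2 A \<delta>0) \<xi>) \<beta>1})"

definition lax_descent_object :: "('o, 'a, 'c, 'z) two_cat_scheme \<Rightarrow> 'a \<Rightarrow> 'a \<Rightarrow> 'a \<Rightarrow>
    'a \<Rightarrow> 'a \<Rightarrow> 'a \<Rightarrow> 'a \<Rightarrow> 'o \<Rightarrow> 'a \<Rightarrow> 'c \<Rightarrow> bool" where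
  "lax_descent_object A p \<delta>0 \<delta>1 D0 D1 D2 s0 L d \<Psi> \<longleftrightarrow>
     L \<in> obj A \<and> d \<in> Hom A L (tgt1 A p) \<and> \<Psi> \<in> Cell A (comp1 A \<delta>1 d) (comp1 A \<delta>0 d) \<and>
     (\<forall>y \<in> obj A. cat_iso (Hom A y L) (Cell A)
        (desc_obj A p \<delta>0 \<delta>1 D0 D1 D2 s0 y) (desc_mor A \<delta>0 \<delta>1)
        (\<lambda>g. (comp1 A d g, hcomp A \<Psi> (ident2 A g)))
        (\<lambda>\<xi>. hcomp A (ident2 A d) \<xi>))"

definition is_right_kan :: "('o, 'a, 'c, 'z) two_cat_scheme \<Rightarrow> 'a \<Rightarrow> 'a \<Rightarrow> 'a \<Rightarrow> 'c \<Rightarrow> bool" where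
  "is_right_kan A f g r \<gamma> \<longleftrightarrow>
     f \<in> arr1 A \<and> g \<in> arr1 A \<and> src1 A f = src1 A g \<and>
     r \<in> Hom A (tgt1 A g) (tgt1 A f) \<and> \<gamma> \<in> Cell A (comp1 A r g) f \<and>
     (\<forall>k \<in> Hom A (tgt1 A g) (tgt1 A f).
        bij_betw (\<lambda>\<beta>. vcomp A \<gamma> (hcomp A \<beta> (ident2 A g))) (Cell A k r) (Cell A (comp1 A k g) f))"

definition preserves_right_kan :: "('o, 'a, 'c, 'z) two_cat_scheme \<Rightarrow> 'a \<Rightarrow> 'a \<Rightarrow> 'a \<Rightarrow> 'a \<Rightarrow> 'c \<Rightarrow> bool" where
  "preserves_right_kan A \<delta> f g r \<gamma> \<longleftrightarrow>
     \<delta> \<in> arr1 A \<and> src1 A \<delta> = tgt1 A f \<and>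
     is_right_kan A (comp1 A \<delta> f) g (comp1 A \<delta> r) (hcomp A (ident2 A \<delta>) \<gamma>)"

text \<open>m and eta of the codensity monad, characterized by their defining equations
(they exist and are unique by the universal property of the Kan extension).\<close>

definition codensity_monad :: "('o, 'a, 'c, 'z) two_cat_scheme \<Rightarrow> 'a \<Rightarrow> 'a \<Rightarrow> 'c \<Rightarrow> 'c \<Rightarrow> 'c \<Rightarrow> bool" where
  "codensity_monad A p t \<gamma> m \<eta> \<longleftrightarrow>
     m \<in> Cell A (comp1 A t t) t \<and>
     vcomp A \<gamma> (hcomp A m (ident2 A p)) = vcomp A \<gamma> (hcomp A (ident2 A t) \<gamma>) \<and>
     \<eta> \<in> Cell A (ident1 A (tgt1 A p)) t \<and>
     vcomp A \<gamma> (hcomp A \<eta> (ident2 A p)) = ident2 A p"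

definition alg_obj :: "('o, 'a, 'c, 'z) two_cat_scheme \<Rightarrow> 'o \<Rightarrow> 'a \<Rightarrow> 'c \<Rightarrow> 'c \<Rightarrow> 'o \<Rightarrow> ('a \<times> 'c) set" where
  "alg_obj A b t m \<eta> y = {(h, \<beta>). h \<in> Hom A y b \<and> \<beta> \<in> Cell A (comp1 A t h) h \<and>
       vcomp A \<beta> (hcomp A (ident2 A t) \<beta>) = vcomp A \<beta> (hcomp A m (ident2 A h)) \<and>
       vcomp A \<beta> (hcomp A \<eta> (ident2 A h)) = ident2 A h}"

definition alg_mor :: "('o, 'a, 'c, 'z) two_cat_scheme \<Rightarrow> 'a \<Rightarrow> ('a \<times> 'c) \<Rightarrow> ('a \<times> 'c) \<Rightarrow> 'c set" where
  "alg_mor A t X1 X0 = (case X1 of (h1, \<beta>1) \<Rightarrow> case X0 of (h0, \<beta>0) \<Rightarrow>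
     {\<xi> \<in> Cell A h1 h0. vcomp A \<xi> \<beta>1 = vcomp A \<beta>0 (hcomp A (ident2 A t) \<xi>)})"

definition em_object :: "('o, 'a, 'c, 'z) two_cat_scheme \<Rightarrow> 'o \<Rightarrow> 'a \<Rightarrow> 'c \<Rightarrow> 'c \<Rightarrow>
    'o \<Rightarrow> 'a \<Rightarrow> 'c \<Rightarrow> bool" where
  "em_object A b t m \<eta> bT u \<mu> \<longleftrightarrow>
     bT \<in> obj A \<and> u \<in> Hom A bT b \<and> \<mu> \<in> Cell A (comp1 A t u) u \<and>
     (\<forall>y \<in> obj A. cat_iso (Hom A y bT) (Cell A) (alg_obj A b t m \<eta> y) (alg_mor A t)
        (\<lambda>g. (comp1 A u g, hcomp A \<mu> (ident2 A g)))
        (\<lambda>\<xi>. hcomp A (ident2 A u) \<xi>))"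

end

theory Submission
  imports Defs
begin


locale twocat =
  fixes A :: "('o, 'a, 'c, 'z) two_cat_scheme"
  assumes tc: "two_category A"
begin

abbreviation "c1 \<equiv> comp1 A"
abbreviation "i1 \<equiv> ident1 A"
abbreviation "vc \<equiv> vcomp A"
abbreviation "hc \<equiv> hcomp A"
abbreviation "i2 \<equiv> ident2 A"


lemma ax0:
  "\<forall>f \<in> arr1 A. src1 A f \<in> obj A \<and> tgt1 A f \<in> obj A"
  using tc unfolding two_category_def apply - apply (elim conjE) by assumption

lemma ax1:
  "\<forall>x \<in> obj A. ident1 A x \<in> Hom A x x"
  using tc unfolding two_category_def apply - apply (elim conjE) by assumption

lemma ax2:
  "\<forall>f \<in> arr1 A. \<forall>g \<in> arr1 A. tgt1 A f = src1 A g \<longrightarrow>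
          comp1 A g f \<in> Hom A (src1 A f) (tgt1 A g)"
  using tc unfolding two_category_def apply - apply (elim conjE) by assumption

lemma ax3:
  "\<forall>f \<in> arr1 A. \<forall>g \<in> arr1 A. \<forall>h \<in> arr1 A.
          tgt1 A f = src1 A g \<longrightarrow> tgt1 A g = src1 A h \<longrightarrow>
          comp1 A h (comp1 A g f) = comp1 A (comp1 A h g) f"
  using tc unfolding two_category_def apply - apply (elim conjE) by assumption

lemma ax4:
  "\<forall>f \<in> arr1 A. comp1 A (ident1 A (tgt1 A f)) f = f \<and>
                    comp1 A f (ident1 A (src1 A f)) = f"
  using tc unfolding two_category_def apply - apply (elim conjE) by assumption

lemma ax5:
  "\<forall>\<alpha> \<in> arr2 A. src2 A \<alpha> \<in> arr1 A \<and> tgt2 A \<alpha> \<in> arr1 A \<and>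
          src1 A (src2 A \<alpha>) = src1 A (tgt2 A \<alpha>) \<and>
          tgt1 A (src2 A \<alpha>) = tgt1 A (tgt2 A \<alpha>)"
  using tc unfolding two_category_def apply - apply (elim conjE) by assumption

lemma ax6:
  "\<forall>f \<in> arr1 A. ident2 A f \<in> Cell A f f"
  using tc unfolding two_category_def apply - apply (elim conjE) by assumption

lemma ax7:
  "\<forall>\<alpha> \<in> arr2 A. \<forall>\<beta> \<in> arr2 A. tgt2 A \<alpha> = src2 A \<beta> \<longrightarrow>
          vcomp A \<beta> \<alpha> \<in> Cell A (src2 A \<alpha>) (tgt2 A \<beta>)"
  using tc unfolding two_category_def apply - apply (elim conjE) by assumption

lemma ax8:
  "\<forall>\<alpha> \<in> arr2 A. \<forall>\<beta> \<in> arr2 A. \<forall>\<gamma> \<in> arr2 A.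
          tgt2 A \<alpha> = src2 A \<beta> \<longrightarrow> tgt2 A \<beta> = src2 A \<gamma> \<longrightarrow>
          vcomp A \<gamma> (vcomp A \<beta> \<alpha>) = vcomp A (vcomp A \<gamma> \<beta>) \<alpha>"
  using tc unfolding two_category_def apply - apply (elim conjE) by assumption

lemma ax9:
  "\<forall>\<alpha> \<in> arr2 A. vcomp A (ident2 A (tgt2 A \<alpha>)) \<alpha> = \<alpha> \<and>
                    vcomp A \<alpha> (ident2 A (src2 A \<alpha>)) = \<alpha>"
  using tc unfolding two_category_def apply - apply (elim conjE) by assumption

lemma ax10:
  "\<forall>\<alpha> \<in> arr2 A. \<forall>\<beta> \<in> arr2 A. tgt1 A (src2 A \<alpha>) = src1 A (src2 A \<beta>) \<longrightarrow>
          hcomp A \<beta> \<alpha> \<in> Cell A (comp1 A (src2 A \<beta>) (src2 A \<alpha>))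
                                 (comp1 A (tgt2 A \<beta>) (tgt2 A \<alpha>))"
  using tc unfolding two_category_def apply - apply (elim conjE) by assumption

lemma ax11:
  "\<forall>f \<in> arr1 A. \<forall>g \<in> arr1 A. tgt1 A f = src1 A g \<longrightarrow>
          hcomp A (ident2 A g) (ident2 A f) = ident2 A (comp1 A g f)"
  using tc unfolding two_category_def apply - apply (elim conjE) by assumption

lemma ax12:
  "\<forall>\<alpha> \<in> arr2 A. \<forall>\<alpha>' \<in> arr2 A. \<forall>\<beta> \<in> arr2 A. \<forall>\<beta>' \<in> arr2 A.
          tgt2 A \<alpha> = src2 A \<alpha>' \<longrightarrow> tgt2 A \<beta> = src2 A \<beta>' \<longrightarrow>
          tgt1 A (src2 A \<alpha>) = src1 A (src2 A \<beta>) \<longrightarrow>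
          hcomp A (vcomp A \<beta>' \<beta>) (vcomp A \<alpha>' \<alpha>) =
          vcomp A (hcomp A \<beta>' \<alpha>') (hcomp A \<beta> \<alpha>)"
  using tc unfolding two_category_def apply - apply (elim conjE) by assumption

lemma ax13:
  "\<forall>\<alpha> \<in> arr2 A. \<forall>\<beta> \<in> arr2 A. \<forall>\<gamma> \<in> arr2 A.
          tgt1 A (src2 A \<alpha>) = src1 A (src2 A \<beta>) \<longrightarrow>
          tgt1 A (src2 A \<beta>) = src1 A (src2 A \<gamma>) \<longrightarrow>
          hcomp A \<gamma> (hcomp A \<beta> \<alpha>) = hcomp A (hcomp A \<gamma> \<beta>) \<alpha>"
  using tc unfolding two_category_def apply - apply (elim conjE) by assumption

lemma ax14:
  "\<forall>\<alpha> \<in> arr2 A. hcomp A (ident2 A (ident1 A (tgt1 A (src2 A \<alpha>)))) \<alpha> = \<alpha> \<and>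
                    hcomp A \<alpha> (ident2 A (ident1 A (src1 A (src2 A \<alpha>)))) = \<alpha>"
  using tc unfolding two_category_def apply - apply (elim conjE) by assumption

lemmas ax = ax0 ax1 ax2 ax3 ax4 ax5 ax6 ax7 ax8 ax9 ax10 ax11 ax12 ax13 ax14


lemma arr1_src [simp]: "f \<in> arr1 A \<Longrightarrow> src1 A f \<in> obj A"
  and arr1_tgt [simp]: "f \<in> arr1 A \<Longrightarrow> tgt1 A f \<in> obj A"
  using ax0 by auto

lemma i1_typ [simp]: "x \<in> obj A \<Longrightarrow> i1 x \<in> arr1 A"
  "x \<in> obj A \<Longrightarrow> src1 A (i1 x) = x" "x \<in> obj A \<Longrightarrow> tgt1 A (i1 x) = x"
  using ax1 unfolding Hom_def by auto

lemma c1_typ [simp]: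
  assumes "f \<in> arr1 A" "g \<in> arr1 A" "tgt1 A f = src1 A g"
  shows "c1 g f \<in> arr1 A" "src1 A (c1 g f) = src1 A f" "tgt1 A (c1 g f) = tgt1 A g"
  using ax2 assms unfolding Hom_def by auto

lemma c1_assoc:
  assumes "f \<in> arr1 A" "g \<in> arr1 A" "h \<in> arr1 A" "tgt1 A f = src1 A g" "tgt1 A g = src1 A h"
  shows "c1 (c1 h g) f = c1 h (c1 g f)"
  using ax3 assms by simp

lemma c1_idl [simp]: "f \<in> arr1 A \<Longrightarrow> tgt1 A f = x \<Longrightarrow> c1 (i1 x) f = f"
  and c1_idr [simp]: "f \<in> arr1 A \<Longrightarrow> src1 A f = x \<Longrightarrow> c1 f (i1 x) = f"
  using ax4 by auto

lemma arr2_typ [simp]: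
  assumes "a \<in> arr2 A"
  shows "src2 A a \<in> arr1 A" "tgt2 A a \<in> arr1 A"
    "src1 A (tgt2 A a) = src1 A (src2 A a)" "tgt1 A (tgt2 A a) = tgt1 A (src2 A a)"
  using ax5 assms by auto

lemma i2_typ [simp]: "f \<in> arr1 A \<Longrightarrow> i2 f \<in> arr2 A"
  "f \<in> arr1 A \<Longrightarrow> src2 A (i2 f) = f" "f \<in> arr1 A \<Longrightarrow> tgt2 A (i2 f) = f"
  using ax6 unfolding Cell_def by auto

lemma vc_typ [simp]:
  assumes "a \<in> arr2 A" "b \<in> arr2 A" "tgt2 A a = src2 A b"
  shows "vc b a \<in> arr2 A" "src2 A (vc b a) = src2 A a" "tgt2 A (vc b a) = tgt2 A b"
  using ax7 assms unfolding Cell_def by auto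

lemma hc_typ [simp]:
  assumes "a \<in> arr2 A" "b \<in> arr2 A" "tgt1 A (src2 A a) = src1 A (src2 A b)"
  shows "hc b a \<in> arr2 A" "src2 A (hc b a) = c1 (src2 A b) (src2 A a)"
    "tgt2 A (hc b a) = c1 (tgt2 A b) (tgt2 A a)"
  using ax10 assms unfolding Cell_def by auto

lemma vc_assoc:
  assumes "a \<in> arr2 A" "b \<in> arr2 A" "c \<in> arr2 A" "tgt2 A a = src2 A b" "tgt2 A b = src2 A c"
  shows "vc (vc c b) a = vc c (vc b a)"
  using ax8 assms by simp

lemma vc_idl [simp]: "a \<in> arr2 A \<Longrightarrow> tgt2 A a = f \<Longrightarrow> vc (i2 f) a = a"
  and vc_idr [simp]: "a \<in> arr2 A \<Longrightarrow> src2 A a = f \<Longrightarrow> vc a (i2 f) = a"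
  using ax9 by auto

lemma hc_i2 [simp]: "f \<in> arr1 A \<Longrightarrow> g \<in> arr1 A \<Longrightarrow> tgt1 A f = src1 A g \<Longrightarrow>
    hc (i2 g) (i2 f) = i2 (c1 g f)"
  using ax11 by auto

lemma interchange:
  assumes "a \<in> arr2 A" "b \<in> arr2 A" "a' \<in> arr2 A" "b' \<in> arr2 A"
    "tgt2 A a = src2 A a'" "tgt2 A b = src2 A b'" "tgt1 A (src2 A a) = src1 A (src2 A b)"
  shows "hc (vc b' b) (vc a' a) = vc (hc b' a') (hc b a)"
  using ax12 assms by simp

lemma hc_assoc:
  assumes "a \<in> arr2 A" "b \<in> arr2 A" "c \<in> arr2 A"
    "tgt1 A (src2 A a) = src1 A (src2 A b)" "tgt1 A (src2 A b) = src1 A (src2 A c)"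
  shows "hc c (hc b a) = hc (hc c b) a"
  using ax13 assms by simp

lemma hc_idl [simp]: "a \<in> arr2 A \<Longrightarrow> tgt1 A (src2 A a) = x \<Longrightarrow> hc (i2 (i1 x)) a = a"
  and hc_idr [simp]: "a \<in> arr2 A \<Longrightarrow> src1 A (src2 A a) = x \<Longrightarrow> hc a (i2 (i1 x)) = a"
  using ax14 by auto

lemma xchg1:
  assumes "a \<in> arr2 A" "b \<in> arr2 A" "tgt1 A (src2 A a) = src1 A (src2 A b)"
  shows "hc b a = vc (hc b (i2 (tgt2 A a))) (hc (i2 (src2 A b)) a)"
proof -
  have "hc b a = hc (vc b (i2 (src2 A b))) (vc (i2 (tgt2 A a)) a)" using assms by simp
  also have "\<dots> = vc (hc b (i2 (tgt2 A a))) (hc (i2 (src2 A b)) a)"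
    using assms by (subst interchange) auto
  finally show ?thesis .
qed

lemma xchg2:
  assumes "a \<in> arr2 A" "b \<in> arr2 A" "tgt1 A (src2 A a) = src1 A (src2 A b)"
  shows "hc b a = vc (hc (i2 (tgt2 A b)) a) (hc b (i2 (src2 A a)))"
proof -
  have "hc b a = hc (vc (i2 (tgt2 A b)) b) (vc a (i2 (src2 A a)))" using assms by simp
  also have "\<dots> = vc (hc (i2 (tgt2 A b)) a) (hc b (i2 (src2 A a)))"
    using assms by (subst interchange) auto
  finally show ?thesis .
qed

lemma whisk_l_vc:
  assumes "a \<in> arr2 A" "b \<in> arr2 A" "tgt2 A a = src2 A b" "k \<in> arr1 A" "tgt1 A (src2 A a) = src1 A k"
  shows "hc (i2 k) (vc b a) = vc (hc (i2 k) b) (hc (i2 k) a)"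
proof -
  have "hc (i2 k) (vc b a) = hc (vc (i2 k) (i2 k)) (vc b a)" using assms by simp
  also have "\<dots> = vc (hc (i2 k) b) (hc (i2 k) a)" using assms by (subst interchange) auto
  finally show ?thesis .
qed

lemma whisk_r_vc:
  assumes "a \<in> arr2 A" "b \<in> arr2 A" "tgt2 A a = src2 A b" "k \<in> arr1 A" "tgt1 A k = src1 A (src2 A a)"
  shows "hc (vc b a) (i2 k) = vc (hc b (i2 k)) (hc a (i2 k))"
proof -
  have "hc (vc b a) (i2 k) = hc (vc b a) (vc (i2 k) (i2 k))" using assms by simp
  also have "\<dots> = vc (hc b (i2 k)) (hc a (i2 k))" using assms by (subst interchange) auto
  finally show ?thesis .
qed

lemma whisk_ll:
  assumes "a \<in> arr2 A" "j \<in> arr1 A" "k \<in> arr1 A" "tgt1 A (src2 A a) = src1 A j" "tgt1 A j = src1 A k"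
  shows "hc (i2 k) (hc (i2 j) a) = hc (i2 (c1 k j)) a"
  using assms by (subst hc_assoc) auto

lemma whisk_rr:
  assumes "a \<in> arr2 A" "j \<in> arr1 A" "k \<in> arr1 A" "tgt1 A k = src1 A j" "tgt1 A j = src1 A (src2 A a)"
  shows "hc (hc a (i2 j)) (i2 k) = hc a (i2 (c1 j k))"
  using assms hc_assoc[of "i2 k" "i2 j" a] by simp

lemma whisk_lr:
  assumes "a \<in> arr2 A" "j \<in> arr1 A" "k \<in> arr1 A" "tgt1 A j = src1 A (src2 A a)" "tgt1 A (src2 A a) = src1 A k"
  shows "hc (hc (i2 k) a) (i2 j) = hc (i2 k) (hc a (i2 j))"
  using assms by (subst hc_assoc) auto

lemma Cell_iff: "a \<in> Cell A f g \<longleftrightarrow> a \<in> arr2 A \<and> src2 A a = f \<and> tgt2 A a = g"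
  by (simp add: Cell_def)
lemma Hom_iff: "f \<in> Hom A x y \<longleftrightarrow> f \<in> arr1 A \<and> src1 A f = x \<and> tgt1 A f = y"
  by (simp add: Hom_def)

end



declare (in twocat) c1_assoc [simp]

locale setting = twocat +
  fixes p C \<delta>0 \<delta>1 \<alpha> P D0 D1 D2 s0 t \<gamma> m \<eta>
  assumes p_arr: "p \<in> arr1 A"
    and cok: "cokernel_diagram A p C \<delta>0 \<delta>1 \<alpha> P D0 D1 D2 s0"
    and kan: "is_right_kan A p p t \<gamma>"
    and pres: "preserves_right_kan A \<delta>0 p p t \<gamma>"
    and cod: "codensity_monad A p t \<gamma> m \<eta>"
begin

abbreviation "b \<equiv> tgt1 A p"

lemma opc: "is_opcomma A p C \<delta>0 \<delta>1 \<alpha>" using cok unfolding cokernel_diagram_def by blast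
lemma po: "is_2pushout A \<delta>0 \<delta>1 P D2 D0" using cok unfolding cokernel_diagram_def by blast

lemma basic [simp]:
  "p \<in> arr1 A" "b \<in> obj A" "src1 A p \<in> obj A"
  "C \<in> obj A" "\<delta>0 \<in> arr1 A" "src1 A \<delta>0 = b" "tgt1 A \<delta>0 = C"
  "\<delta>1 \<in> arr1 A" "src1 A \<delta>1 = b" "tgt1 A \<delta>1 = C"
  "\<alpha> \<in> arr2 A" "src2 A \<alpha> = c1 \<delta>1 p" "tgt2 A \<alpha> = c1 \<delta>0 p"
  "P \<in> obj A" "D0 \<in> arr1 A" "src1 A D0 = C" "tgt1 A D0 = P"
  "D1 \<in> arr1 A" "src1 A D1 = C" "tgt1 A D1 = P"
  "D2 \<in> arr1 A" "src1 A D2 = C" "tgt1 A D2 = P"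
  "s0 \<in> arr1 A" "src1 A s0 = C" "tgt1 A s0 = b"
  "t \<in> arr1 A" "src1 A t = b" "tgt1 A t = b"
  "\<gamma> \<in> arr2 A" "src2 A \<gamma> = c1 t p" "tgt2 A \<gamma> = p"
  "m \<in> arr2 A" "src2 A m = c1 t t" "tgt2 A m = t"
  "\<eta> \<in> arr2 A" "src2 A \<eta> = i1 b" "tgt2 A \<eta> = t"
  using p_arr opc po cok kan cod
  unfolding is_opcomma_def is_2pushout_def cokernel_diagram_def is_right_kan_def
    codensity_monad_def Hom_def Cell_def
  by auto

lemma D_eqs:
  "c1 D2 \<delta>0 = c1 D0 \<delta>1" "c1 D1 \<delta>1 = c1 D2 \<delta>1" "c1 D1 \<delta>0 = c1 D0 \<delta>0"
  "hc (i2 D1) \<alpha> = vc (hc (i2 D0) \<alpha>) (hc (i2 D2) \<alpha>)"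
  "c1 s0 \<delta>0 = i1 b" "c1 s0 \<delta>1 = i1 b" "hc (i2 s0) \<alpha> = i2 p"
  using po cok unfolding is_2pushout_def cokernel_diagram_def by auto

lemma cod_eqs:
  "vc \<gamma> (hc m (i2 p)) = vc \<gamma> (hc (i2 t) \<gamma>)"
  "vc \<gamma> (hc \<eta> (i2 p)) = i2 p"
  using cod unfolding codensity_monad_def by auto

lemma D_eqs' [simp]:
  "x \<in> arr1 A \<Longrightarrow> tgt1 A x = b \<Longrightarrow> c1 D2 (c1 \<delta>0 x) = c1 D0 (c1 \<delta>1 x)"
  "x \<in> arr1 A \<Longrightarrow> tgt1 A x = b \<Longrightarrow> c1 D1 (c1 \<delta>1 x) = c1 D2 (c1 \<delta>1 x)"
  "x \<in> arr1 A \<Longrightarrow> tgt1 A x = b \<Longrightarrow> c1 D1 (c1 \<delta>0 x) = c1 D0 (c1 \<delta>0 x)"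
  "x \<in> arr1 A \<Longrightarrow> tgt1 A x = b \<Longrightarrow> c1 s0 (c1 \<delta>0 x) = x"
  "x \<in> arr1 A \<Longrightarrow> tgt1 A x = b \<Longrightarrow> c1 s0 (c1 \<delta>1 x) = x"
  using D_eqs c1_assoc[of x \<delta>0 D2] c1_assoc[of x \<delta>1 D0] c1_assoc[of x \<delta>1 D1] c1_assoc[of x \<delta>1 D2]
    c1_assoc[of x \<delta>0 D1] c1_assoc[of x \<delta>0 D0] c1_assoc[of x \<delta>0 s0] c1_assoc[of x \<delta>1 s0]
  by (auto simp del: c1_assoc)

lemma D_eqs2 [simp]:  "c1 D2 \<delta>0 = c1 D0 \<delta>1" "c1 D1 \<delta>1 = c1 D2 \<delta>1" "c1 D1 \<delta>0 = c1 D0 \<delta>0"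
  "c1 s0 \<delta>0 = i1 b" "c1 s0 \<delta>1 = i1 b"
  using D_eqs by auto

end


context setting
begin

lemma opc_1:
  assumes "y \<in> obj A" "h0 \<in> Hom A b y" "h1 \<in> Hom A b y" "\<beta> \<in> Cell A (c1 h1 p) (c1 h0 p)"
  shows "\<exists>h \<in> Hom A C y. c1 h \<delta>0 = h0 \<and> c1 h \<delta>1 = h1 \<and> hc (i2 h) \<alpha> = \<beta>"
proof -
  have "bij_betw (\<lambda>h. (c1 h \<delta>0, c1 h \<delta>1, hc (i2 h) \<alpha>)) (Hom A C y) (opc_obj A p y)"
    using opc assms(1) unfolding is_opcomma_def cat_iso_def by blast
  moreover have "(h0, h1, \<beta>) \<in> opc_obj A p y" using assms unfolding opc_obj_def by auto
  ultimately obtain h where "h \<in> Hom A C y" "(c1 h \<delta>0, c1 h \<delta>1, hc (i2 h) \<alpha>) = (h0, h1, \<beta>)"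
    unfolding bij_betw_def by (metis (no_types, lifting) imageE)
  then show ?thesis by auto
qed

lemma opc_2:
  assumes "y \<in> obj A" "k \<in> Hom A C y" "k' \<in> Hom A C y"
    "\<xi>0 \<in> Cell A (c1 k \<delta>0) (c1 k' \<delta>0)" "\<xi>1 \<in> Cell A (c1 k \<delta>1) (c1 k' \<delta>1)"
    "vc (hc \<xi>0 (i2 p)) (hc (i2 k) \<alpha>) = vc (hc (i2 k') \<alpha>) (hc \<xi>1 (i2 p))"
  shows "\<exists>\<xi> \<in> Cell A k k'. hc \<xi> (i2 \<delta>0) = \<xi>0 \<and> hc \<xi> (i2 \<delta>1) = \<xi>1"
proof -
  have "bij_betw (\<lambda>\<xi>. (hc \<xi> (i2 \<delta>0), hc \<xi> (i2 \<delta>1))) (Cell A k k')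
     (opc_mor A p (c1 k \<delta>0, c1 k \<delta>1, hc (i2 k) \<alpha>) (c1 k' \<delta>0, c1 k' \<delta>1, hc (i2 k') \<alpha>))"
    using opc assms(1-3) unfolding is_opcomma_def cat_iso_def by blast
  moreover have "(\<xi>0, \<xi>1) \<in> opc_mor A p (c1 k \<delta>0, c1 k \<delta>1, hc (i2 k) \<alpha>) (c1 k' \<delta>0, c1 k' \<delta>1, hc (i2 k') \<alpha>)"
    using assms unfolding opc_mor_def by auto
  ultimately obtain \<xi> where "\<xi> \<in> Cell A k k'" "(hc \<xi> (i2 \<delta>0), hc \<xi> (i2 \<delta>1)) = (\<xi>0, \<xi>1)"
    unfolding bij_betw_def by (metis (no_types, lifting) imageE)
  then show ?thesis by auto
qed

lemma po_1:
  assumes "y \<in> obj A" "k0 \<in> Hom A C y" "k1 \<in> Hom A C y" "c1 k0 \<delta>0 = c1 k1 \<delta>1"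
  shows "\<exists>k \<in> Hom A P y. c1 k D2 = k0 \<and> c1 k D0 = k1"
proof -
  have "bij_betw (\<lambda>k. (c1 k D2, c1 k D0)) (Hom A P y) (po_obj A \<delta>0 \<delta>1 y)"
    using po assms(1) unfolding is_2pushout_def cat_iso_def by blast
  moreover have "(k0, k1) \<in> po_obj A \<delta>0 \<delta>1 y" using assms unfolding po_obj_def by auto
  ultimately obtain k where "k \<in> Hom A P y" "(c1 k D2, c1 k D0) = (k0, k1)"
    unfolding bij_betw_def by (metis (no_types, lifting) imageE)
  then show ?thesis by auto
qed

lemma po_2:
  assumes "y \<in> obj A" "k \<in> Hom A P y" "k' \<in> Hom A P y"
    "\<xi>0 \<in> Cell A (c1 k D2) (c1 k' D2)" "\<xi>1 \<in> Cell A (c1 k D0) (c1 k' D0)"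
    "hc \<xi>0 (i2 \<delta>0) = hc \<xi>1 (i2 \<delta>1)"
  shows "\<exists>\<xi> \<in> Cell A k k'. hc \<xi> (i2 D2) = \<xi>0 \<and> hc \<xi> (i2 D0) = \<xi>1"
proof -
  have "bij_betw (\<lambda>\<xi>. (hc \<xi> (i2 D2), hc \<xi> (i2 D0))) (Cell A k k')
     (po_mor A \<delta>0 \<delta>1 (c1 k D2, c1 k D0) (c1 k' D2, c1 k' D0))"
    using po assms(1-3) unfolding is_2pushout_def cat_iso_def by blast
  moreover have "(\<xi>0, \<xi>1) \<in> po_mor A \<delta>0 \<delta>1 (c1 k D2, c1 k D0) (c1 k' D2, c1 k' D0)"
    using assms unfolding po_mor_def by auto
  ultimately obtain \<xi> where "\<xi> \<in> Cell A k k'" "(hc \<xi> (i2 D2), hc \<xi> (i2 D0)) = (\<xi>0, \<xi>1)"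
    unfolding bij_betw_def by (metis (no_types, lifting) imageE)
  then show ?thesis by auto
qed

lemma kan_inj:
  assumes "x \<in> Cell A t t" "x' \<in> Cell A t t" "vc \<gamma> (hc x (i2 p)) = vc \<gamma> (hc x' (i2 p))"
  shows "x = x'"
proof -
  have "bij_betw (\<lambda>\<beta>. vc \<gamma> (hc \<beta> (i2 p))) (Cell A t t) (Cell A (c1 t p) p)"
    using kan unfolding is_right_kan_def Hom_def by auto
  then show ?thesis using assms unfolding bij_betw_def inj_on_def by blast
qed

lemma pres_surj:
  assumes "k \<in> Hom A b C" "a \<in> Cell A (c1 k p) (c1 \<delta>0 p)"
  shows "\<exists>x \<in> Cell A k (c1 \<delta>0 t). vc (hc (i2 \<delta>0) \<gamma>) (hc x (i2 p)) = a"
proof -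
  have "bij_betw (\<lambda>\<beta>. vc (hc (i2 \<delta>0) \<gamma>) (hc \<beta> (i2 p))) (Cell A k (c1 \<delta>0 t)) (Cell A (c1 k p) (c1 \<delta>0 p))"
    using pres assms(1) unfolding preserves_right_kan_def is_right_kan_def by auto
  then show ?thesis using assms unfolding bij_betw_def by (metis (no_types, lifting) imageE)
qed

end


context setting
begin

definition "ell = (SOME h. h \<in> Hom A C b \<and> c1 h \<delta>0 = i1 b \<and> c1 h \<delta>1 = t \<and> hc (i2 h) \<alpha> = \<gamma>)"

lemma ell: "ell \<in> Hom A C b \<and> c1 ell \<delta>0 = i1 b \<and> c1 ell \<delta>1 = t \<and> hc (i2 ell) \<alpha> = \<gamma>"
proof -
  have "\<exists>h \<in> Hom A C b. c1 h \<delta>0 = i1 b \<and> c1 h \<delta>1 = t \<and> hc (i2 h) \<alpha> = \<gamma>"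
    by (rule opc_1) (auto simp: Hom_iff Cell_iff)
  then show ?thesis unfolding ell_def by (rule someI2_bex) blast
qed

lemma ell_s [simp]: "ell \<in> arr1 A" "src1 A ell = C" "tgt1 A ell = b"
  "c1 ell \<delta>0 = i1 b" "c1 ell \<delta>1 = t" "hc (i2 ell) \<alpha> = \<gamma>"
  using ell by (auto simp: Hom_iff)

lemma ell_x [simp]: "x \<in> arr1 A \<Longrightarrow> tgt1 A x = b \<Longrightarrow> c1 ell (c1 \<delta>0 x) = x"
  "x \<in> arr1 A \<Longrightarrow> tgt1 A x = b \<Longrightarrow> c1 ell (c1 \<delta>1 x) = c1 t x"
  using c1_assoc[of x \<delta>0 ell] c1_assoc[of x \<delta>1 ell] by (auto simp del: c1_assoc)

definition "sig = (SOME x. x \<in> Cell A \<delta>1 (c1 \<delta>0 t) \<and> vc (hc (i2 \<delta>0) \<gamma>) (hc x (i2 p)) = \<alpha>)"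

lemma sig: "sig \<in> Cell A \<delta>1 (c1 \<delta>0 t) \<and> vc (hc (i2 \<delta>0) \<gamma>) (hc sig (i2 p)) = \<alpha>"
proof -
  have "\<exists>x \<in> Cell A \<delta>1 (c1 \<delta>0 t). vc (hc (i2 \<delta>0) \<gamma>) (hc x (i2 p)) = \<alpha>"
    by (rule pres_surj) (auto simp: Hom_iff Cell_iff)
  then show ?thesis unfolding sig_def by (rule someI2_bex) blast
qed

lemma sig_s [simp]: "sig \<in> arr2 A" "src2 A sig = \<delta>1" "tgt2 A sig = c1 \<delta>0 t"
  using sig by (auto simp: Cell_iff)

lemma sig_eq: "vc (hc (i2 \<delta>0) \<gamma>) (hc sig (i2 p)) = \<alpha>" using sig by blast

lemma lsig [simp]: "hc (i2 ell) sig = i2 t"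
proof (rule kan_inj)
  show "hc (i2 ell) sig \<in> Cell A t t" "i2 t \<in> Cell A t t" by (auto simp: Cell_iff)
  have "\<gamma> = hc (i2 ell) (vc (hc (i2 \<delta>0) \<gamma>) (hc sig (i2 p)))" using sig_eq by simp
  also have "\<dots> = vc (hc (i2 ell) (hc (i2 \<delta>0) \<gamma>)) (hc (i2 ell) (hc sig (i2 p)))"
    by (rule whisk_l_vc) auto
  also have "hc (i2 ell) (hc (i2 \<delta>0) \<gamma>) = \<gamma>" by (subst whisk_ll) auto
  also have "hc (i2 ell) (hc sig (i2 p)) = hc (hc (i2 ell) sig) (i2 p)" by (subst whisk_lr) auto
  finally show "vc \<gamma> (hc (hc (i2 ell) sig) (i2 p)) = vc \<gamma> (hc (i2 t) (i2 p))" by simp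
qed

definition "tau = (SOME x. x \<in> Cell A (i1 C) (c1 \<delta>0 ell) \<and> hc x (i2 \<delta>0) = i2 \<delta>0 \<and> hc x (i2 \<delta>1) = sig)"

lemma tau: "tau \<in> Cell A (i1 C) (c1 \<delta>0 ell) \<and> hc tau (i2 \<delta>0) = i2 \<delta>0 \<and> hc tau (i2 \<delta>1) = sig"
proof -
  have "\<exists>x \<in> Cell A (i1 C) (c1 \<delta>0 ell). hc x (i2 \<delta>0) = i2 \<delta>0 \<and> hc x (i2 \<delta>1) = sig"
  proof (rule opc_2)
    have "hc (i2 (c1 \<delta>0 ell)) \<alpha> = hc (i2 \<delta>0) (hc (i2 ell) \<alpha>)" by (subst whisk_ll) auto
    then show "vc (hc (i2 \<delta>0) (i2 p)) (hc (i2 (i1 C)) \<alpha>) = vc (hc (i2 (c1 \<delta>0 ell)) \<alpha>) (hc sig (i2 p))"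
      using sig_eq by simp
  qed (auto simp: Hom_iff Cell_iff)
  then show ?thesis unfolding tau_def by (rule someI2_bex) blast
qed

lemma tau_s [simp]: "tau \<in> arr2 A" "src2 A tau = i1 C" "tgt2 A tau = c1 \<delta>0 ell"
  "hc tau (i2 \<delta>0) = i2 \<delta>0" "hc tau (i2 \<delta>1) = sig"
  using tau by (auto simp: Cell_iff)

definition "eps = (SOME x. x \<in> Cell A s0 ell \<and> hc x (i2 \<delta>0) = i2 (i1 b) \<and> hc x (i2 \<delta>1) = \<eta>)"

lemma eps: "eps \<in> Cell A s0 ell \<and> hc eps (i2 \<delta>0) = i2 (i1 b) \<and> hc eps (i2 \<delta>1) = \<eta>"
proof -
  have "\<exists>x \<in> Cell A s0 ell. hc x (i2 \<delta>0) = i2 (i1 b) \<and> hc x (i2 \<delta>1) = \<eta>"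
  proof (rule opc_2)
    show "vc (hc (i2 (i1 b)) (i2 p)) (hc (i2 s0) \<alpha>) = vc (hc (i2 ell) \<alpha>) (hc \<eta> (i2 p))"
      using cod_eqs D_eqs by simp
  qed (auto simp: Hom_iff Cell_iff)
  then show ?thesis unfolding eps_def by (rule someI2_bex) blast
qed

lemma eps_s [simp]: "eps \<in> arr2 A" "src2 A eps = s0" "tgt2 A eps = ell"
  "hc eps (i2 \<delta>0) = i2 (i1 b)" "hc eps (i2 \<delta>1) = \<eta>"
  using eps by (auto simp: Cell_iff)

definition "L2 = (SOME k. k \<in> Hom A P b \<and> c1 k D2 = c1 t ell \<and> c1 k D0 = ell)"

lemma L2: "L2 \<in> Hom A P b \<and> c1 L2 D2 = c1 t ell \<and> c1 L2 D0 = ell"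
proof -
  have "\<exists>k \<in> Hom A P b. c1 k D2 = c1 t ell \<and> c1 k D0 = ell"
    by (rule po_1) (auto simp: Hom_iff)
  then show ?thesis unfolding L2_def by (rule someI2_bex) blast
qed

lemma L2_s [simp]: "L2 \<in> arr1 A" "src1 A L2 = P" "tgt1 A L2 = b"
  "c1 L2 D2 = c1 t ell" "c1 L2 D0 = ell"
  using L2 by (auto simp: Hom_iff)

lemma L2_x [simp]: "x \<in> arr1 A \<Longrightarrow> tgt1 A x = C \<Longrightarrow> c1 L2 (c1 D2 x) = c1 t (c1 ell x)"
  "x \<in> arr1 A \<Longrightarrow> tgt1 A x = C \<Longrightarrow> c1 L2 (c1 D0 x) = c1 ell x"
  using c1_assoc[of x D2 L2] c1_assoc[of x D0 L2] c1_assoc[of x ell t] by (auto simp del: c1_assoc)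

definition "mu' = (SOME x. x \<in> Cell A (c1 L2 D1) ell \<and> hc x (i2 \<delta>0) = i2 (i1 b) \<and> hc x (i2 \<delta>1) = m)"

lemma mu': "mu' \<in> Cell A (c1 L2 D1) ell \<and> hc mu' (i2 \<delta>0) = i2 (i1 b) \<and> hc mu' (i2 \<delta>1) = m"
proof -
  have "\<exists>x \<in> Cell A (c1 L2 D1) ell. hc x (i2 \<delta>0) = i2 (i1 b) \<and> hc x (i2 \<delta>1) = m"
  proof (rule opc_2)
    have "hc (i2 (c1 L2 D1)) \<alpha> = hc (i2 L2) (hc (i2 D1) \<alpha>)" by (subst whisk_ll) auto
    also have "\<dots> = hc (i2 L2) (vc (hc (i2 D0) \<alpha>) (hc (i2 D2) \<alpha>))" using D_eqs by simp
    also have "\<dots> = vc (hc (i2 L2) (hc (i2 D0) \<alpha>)) (hc (i2 L2) (hc (i2 D2) \<alpha>))"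
      by (rule whisk_l_vc) auto
    also have "hc (i2 L2) (hc (i2 D0) \<alpha>) = \<gamma>" by (subst whisk_ll) auto
    also have "hc (i2 L2) (hc (i2 D2) \<alpha>) = hc (i2 (c1 t ell)) \<alpha>" by (subst whisk_ll) auto
    also have "\<dots> = hc (i2 t) \<gamma>" by (subst whisk_ll[symmetric]) auto
    finally have e: "hc (i2 (c1 L2 D1)) \<alpha> = vc \<gamma> (hc (i2 t) \<gamma>)" .
    show "vc (hc (i2 (i1 b)) (i2 p)) (hc (i2 (c1 L2 D1)) \<alpha>) = vc (hc (i2 ell) \<alpha>) (hc m (i2 p))"
      unfolding e using cod_eqs by simp
  qed (auto simp: Hom_iff Cell_iff)
  then show ?thesis unfolding mu'_def by (rule someI2_bex) blast
qed

lemma mu'_s [simp]: "mu' \<in> arr2 A" "src2 A mu' = c1 L2 D1" "tgt2 A mu' = ell"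
  "hc mu' (i2 \<delta>0) = i2 (i1 b)" "hc mu' (i2 \<delta>1) = m"
  using mu' by (auto simp: Cell_iff)

definition "theta = (SOME x. x \<in> Cell A (i1 P) (c1 D0 (c1 \<delta>0 L2)) \<and> hc x (i2 D0) = hc (i2 D0) tau)"

lemma theta: "theta \<in> Cell A (i1 P) (c1 D0 (c1 \<delta>0 L2)) \<and> hc theta (i2 D0) = hc (i2 D0) tau"
proof -
  have "\<exists>x \<in> Cell A (i1 P) (c1 D0 (c1 \<delta>0 L2)).
     hc x (i2 D2) = vc (hc (i2 D0) (hc sig (i2 ell))) (hc (i2 D2) tau) \<and> hc x (i2 D0) = hc (i2 D0) tau"
  proof (rule po_2)
    have "hc (vc (hc (i2 D0) (hc sig (i2 ell))) (hc (i2 D2) tau)) (i2 \<delta>0)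
       = vc (hc (hc (i2 D0) (hc sig (i2 ell))) (i2 \<delta>0)) (hc (hc (i2 D2) tau) (i2 \<delta>0))"
      by (rule whisk_r_vc) auto
    also have "hc (hc (i2 D0) (hc sig (i2 ell))) (i2 \<delta>0) = hc (i2 D0) (hc (hc sig (i2 ell)) (i2 \<delta>0))"
      by (subst whisk_lr) auto
    also have "hc (hc sig (i2 ell)) (i2 \<delta>0) = sig" by (subst whisk_rr) auto
    also have "hc (hc (i2 D2) tau) (i2 \<delta>0) = hc (i2 D2) (hc tau (i2 \<delta>0))"
      by (subst whisk_lr) auto
    finally have e: "hc (vc (hc (i2 D0) (hc sig (i2 ell))) (hc (i2 D2) tau)) (i2 \<delta>0) =
      vc (hc (i2 D0) sig) (hc (i2 D2) (hc tau (i2 \<delta>0)))" .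
    have "hc (hc (i2 D0) tau) (i2 \<delta>1) = hc (i2 D0) (hc tau (i2 \<delta>1))"
      by (subst whisk_lr) auto
    with e show "hc (vc (hc (i2 D0) (hc sig (i2 ell))) (hc (i2 D2) tau)) (i2 \<delta>0) = hc (hc (i2 D0) tau) (i2 \<delta>1)"
      by simp
  qed (auto simp: Hom_iff Cell_iff)
  then have "\<exists>x \<in> Cell A (i1 P) (c1 D0 (c1 \<delta>0 L2)). hc x (i2 D0) = hc (i2 D0) tau" by blast
  then show ?thesis unfolding theta_def by (rule someI2_bex) blast
qed

lemma theta_s [simp]: "theta \<in> arr2 A" "src2 A theta = i1 P" "tgt2 A theta = c1 D0 (c1 \<delta>0 L2)"
  "hc theta (i2 D0) = hc (i2 D0) tau"
  using theta by (auto simp: Cell_iff)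

end


context setting
begin

lemma GF:
  assumes h: "h0 \<in> arr1 A" "h1 \<in> arr1 A" "tgt1 A h0 = b" "tgt1 A h1 = b" "src1 A h0 = src1 A h1"
    and be: "\<beta> \<in> arr2 A" "src2 A \<beta> = c1 \<delta>1 h1" "tgt2 A \<beta> = c1 \<delta>0 h0"
  shows "vc (hc (i2 \<delta>0) (hc (i2 ell) \<beta>)) (hc sig (i2 h1)) = \<beta>"
proof -
  have "hc tau \<beta> = vc (hc tau (i2 (tgt2 A \<beta>))) (hc (i2 (src2 A tau)) \<beta>)"
    by (rule xchg1) (use h be in auto)
  also have "hc tau (i2 (tgt2 A \<beta>)) = hc (hc tau (i2 \<delta>0)) (i2 h0)"
    using h be by (subst whisk_rr) auto
  finally have 1: "hc tau \<beta> = \<beta>" using h be by simp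
  have "hc tau \<beta> = vc (hc (i2 (tgt2 A tau)) \<beta>) (hc tau (i2 (src2 A \<beta>)))"
    by (rule xchg2) (use h be in auto)
  also have "hc (i2 (tgt2 A tau)) \<beta> = hc (i2 \<delta>0) (hc (i2 ell) \<beta>)"
    using h be by (subst whisk_ll) auto
  also have "hc tau (i2 (src2 A \<beta>)) = hc (hc tau (i2 \<delta>1)) (i2 h1)"
    using h be by (subst whisk_rr) auto
  finally show ?thesis using 1 by simp
qed

lemma F_inj:
  assumes h: "h0 \<in> arr1 A" "h1 \<in> arr1 A" "tgt1 A h0 = b" "tgt1 A h1 = b" "src1 A h0 = src1 A h1"
    and be: "\<beta> \<in> arr2 A" "src2 A \<beta> = c1 \<delta>1 h1" "tgt2 A \<beta> = c1 \<delta>0 h0"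
    and be': "\<beta>' \<in> arr2 A" "src2 A \<beta>' = c1 \<delta>1 h1" "tgt2 A \<beta>' = c1 \<delta>0 h0"
    and e: "hc (i2 ell) \<beta> = hc (i2 ell) \<beta>'"
  shows "\<beta> = \<beta>'"
  using GF[OF h be] GF[OF h be'] e by metis

lemma F_typ:
  assumes h: "h0 \<in> arr1 A" "h1 \<in> arr1 A" "tgt1 A h0 = b" "tgt1 A h1 = b" "src1 A h0 = src1 A h1"
    and be: "\<beta> \<in> arr2 A" "src2 A \<beta> = c1 \<delta>1 h1" "tgt2 A \<beta> = c1 \<delta>0 h0"
  shows "hc (i2 ell) \<beta> \<in> arr2 A" "src2 A (hc (i2 ell) \<beta>) = c1 t h1" "tgt2 A (hc (i2 ell) \<beta>) = h0"
  using h be by auto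

definition "G h1 a = vc (hc (i2 \<delta>0) a) (hc sig (i2 h1))"

lemma FG:
  assumes h: "h0 \<in> arr1 A" "h1 \<in> arr1 A" "tgt1 A h0 = b" "tgt1 A h1 = b" "src1 A h0 = src1 A h1"
    and a: "a \<in> arr2 A" "src2 A a = c1 t h1" "tgt2 A a = h0"
  shows "G h1 a \<in> arr2 A" "src2 A (G h1 a) = c1 \<delta>1 h1" "tgt2 A (G h1 a) = c1 \<delta>0 h0"
    "hc (i2 ell) (G h1 a) = a"
proof -
  show "G h1 a \<in> arr2 A" "src2 A (G h1 a) = c1 \<delta>1 h1" "tgt2 A (G h1 a) = c1 \<delta>0 h0"
    unfolding G_def using h a by auto
  have "hc (i2 ell) (G h1 a) = vc (hc (i2 ell) (hc (i2 \<delta>0) a)) (hc (i2 ell) (hc sig (i2 h1)))"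
    unfolding G_def by (rule whisk_l_vc) (use h a in auto)
  also have "hc (i2 ell) (hc (i2 \<delta>0) a) = a" using h a by (subst whisk_ll) auto
  also have "hc (i2 ell) (hc sig (i2 h1)) = hc (hc (i2 ell) sig) (i2 h1)"
    using h a by (subst whisk_lr) auto
  finally show "hc (i2 ell) (G h1 a) = a" using h a by simp
qed

lemma unit_eq:
  assumes h: "h0 \<in> arr1 A" "h1 \<in> arr1 A" "tgt1 A h0 = b" "tgt1 A h1 = b" "src1 A h0 = src1 A h1"
    and be: "\<beta> \<in> arr2 A" "src2 A \<beta> = c1 \<delta>1 h1" "tgt2 A \<beta> = c1 \<delta>0 h0"
  shows "hc (i2 s0) \<beta> = vc (hc (i2 ell) \<beta>) (hc \<eta> (i2 h1))"
proof -
  have "hc eps \<beta> = vc (hc eps (i2 (tgt2 A \<beta>))) (hc (i2 (src2 A eps)) \<beta>)"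
    by (rule xchg1) (use h be in auto)
  also have "hc eps (i2 (tgt2 A \<beta>)) = hc (hc eps (i2 \<delta>0)) (i2 h0)"
    using h be by (subst whisk_rr) auto
  finally have 1: "hc eps \<beta> = hc (i2 s0) \<beta>" using h be by simp
  have "hc eps \<beta> = vc (hc (i2 (tgt2 A eps)) \<beta>) (hc eps (i2 (src2 A \<beta>)))"
    by (rule xchg2) (use h be in auto)
  also have "hc eps (i2 (src2 A \<beta>)) = hc (hc eps (i2 \<delta>1)) (i2 h1)"
    using h be by (subst whisk_rr) auto
  finally show ?thesis using 1 by simp
qed

lemma L2_inj:
  assumes h: "h \<in> arr1 A" "tgt1 A h = b"
    and w: "w \<in> arr2 A" "src2 A w = c1 D2 (c1 \<delta>1 h)" "tgt2 A w = c1 D0 (c1 \<delta>0 h)"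
  shows "vc (hc (i2 (c1 D0 \<delta>0)) (hc (i2 L2) w)) (hc theta (i2 (c1 D2 (c1 \<delta>1 h)))) = w"
proof -
  have "hc theta w = vc (hc theta (i2 (tgt2 A w))) (hc (i2 (src2 A theta)) w)"
    by (rule xchg1) (use h w in auto)
  also have "hc theta (i2 (tgt2 A w)) = hc (hc theta (i2 D0)) (i2 (c1 \<delta>0 h))"
    using h w by (subst whisk_rr) auto
  also have "\<dots> = hc (i2 D0) (hc tau (i2 (c1 \<delta>0 h)))"
    using h w by (simp add: whisk_lr)
  also have "hc tau (i2 (c1 \<delta>0 h)) = hc (hc tau (i2 \<delta>0)) (i2 h)"
    using h w by (subst whisk_rr) auto
  finally have 1: "hc theta w = w" using h w by simp
  have "hc theta w = vc (hc (i2 (tgt2 A theta)) w) (hc theta (i2 (src2 A w)))"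
    by (rule xchg2) (use h w in auto)
  also have "hc (i2 (tgt2 A theta)) w = hc (i2 (c1 D0 \<delta>0)) (hc (i2 L2) w)"
    using h w by (subst whisk_ll) auto
  finally show ?thesis using 1 h w by simp
qed

lemma cocycle_iff:
  assumes h: "h \<in> arr1 A" "tgt1 A h = b"
    and be: "\<beta> \<in> arr2 A" "src2 A \<beta> = c1 \<delta>1 h" "tgt2 A \<beta> = c1 \<delta>0 h"
  shows "(vc (hc (i2 D0) \<beta>) (hc (i2 D2) \<beta>) = hc (i2 D1) \<beta>) \<longleftrightarrow>
     (vc (hc (i2 ell) \<beta>) (hc (i2 t) (hc (i2 ell) \<beta>)) = vc (hc (i2 ell) \<beta>) (hc m (i2 h)))"
proof -
  let ?X = "vc (hc (i2 D0) \<beta>) (hc (i2 D2) \<beta>)"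
  let ?Y = "hc (i2 D1) \<beta>"
  have tX: "?X \<in> arr2 A" "src2 A ?X = c1 D2 (c1 \<delta>1 h)" "tgt2 A ?X = c1 D0 (c1 \<delta>0 h)"
    using h be by auto
  have tY: "?Y \<in> arr2 A" "src2 A ?Y = c1 D2 (c1 \<delta>1 h)" "tgt2 A ?Y = c1 D0 (c1 \<delta>0 h)"
    using h be by auto
  have "hc (i2 L2) ?X = vc (hc (i2 L2) (hc (i2 D0) \<beta>)) (hc (i2 L2) (hc (i2 D2) \<beta>))"
    by (rule whisk_l_vc) (use h be in auto)
  also have "hc (i2 L2) (hc (i2 D0) \<beta>) = hc (i2 ell) \<beta>" using h be by (subst whisk_ll) auto
  also have "hc (i2 L2) (hc (i2 D2) \<beta>) = hc (i2 (c1 t ell)) \<beta>" using h be by (subst whisk_ll) auto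
  also have "\<dots> = hc (i2 t) (hc (i2 ell) \<beta>)" using h be by (subst whisk_ll[symmetric]) auto
  finally have LX: "hc (i2 L2) ?X = vc (hc (i2 ell) \<beta>) (hc (i2 t) (hc (i2 ell) \<beta>))" .
  have "hc mu' \<beta> = vc (hc mu' (i2 (tgt2 A \<beta>))) (hc (i2 (src2 A mu')) \<beta>)"
    by (rule xchg1) (use h be in auto)
  also have "hc mu' (i2 (tgt2 A \<beta>)) = hc (hc mu' (i2 \<delta>0)) (i2 h)"
    using h be by (subst whisk_rr) auto
  finally have 1: "hc mu' \<beta> = hc (i2 (c1 L2 D1)) \<beta>" using h be by simp
  have "hc mu' \<beta> = vc (hc (i2 (tgt2 A mu')) \<beta>) (hc mu' (i2 (src2 A \<beta>)))"
    by (rule xchg2) (use h be in auto)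
  also have "hc mu' (i2 (src2 A \<beta>)) = hc (hc mu' (i2 \<delta>1)) (i2 h)"
    using h be by (subst whisk_rr) auto
  finally have 2: "hc mu' \<beta> = vc (hc (i2 ell) \<beta>) (hc m (i2 h))" using h be by simp
  have LY: "hc (i2 L2) ?Y = vc (hc (i2 ell) \<beta>) (hc m (i2 h))"
    using 1 2 h be by (subst whisk_ll) auto
  show ?thesis
  proof
    assume "?X = ?Y" then show "vc (hc (i2 ell) \<beta>) (hc (i2 t) (hc (i2 ell) \<beta>)) = vc (hc (i2 ell) \<beta>) (hc m (i2 h))"
      using LX LY by simp
  next
    assume "vc (hc (i2 ell) \<beta>) (hc (i2 t) (hc (i2 ell) \<beta>)) = vc (hc (i2 ell) \<beta>) (hc m (i2 h))"
    then have "hc (i2 L2) ?X = hc (i2 L2) ?Y" using LX LY by simp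
    then show "?X = ?Y" using L2_inj[OF h tX] L2_inj[OF h tY] by metis
  qed
qed

lemma mor_iff:
  assumes h: "h0 \<in> arr1 A" "h1 \<in> arr1 A" "tgt1 A h0 = b" "tgt1 A h1 = b" "src1 A h0 = src1 A h1"
    and x: "\<xi> \<in> arr2 A" "src2 A \<xi> = h1" "tgt2 A \<xi> = h0"
    and b1: "\<beta>1 \<in> arr2 A" "src2 A \<beta>1 = c1 \<delta>1 h1" "tgt2 A \<beta>1 = c1 \<delta>0 h1"
    and b0: "\<beta>0 \<in> arr2 A" "src2 A \<beta>0 = c1 \<delta>1 h0" "tgt2 A \<beta>0 = c1 \<delta>0 h0"
  shows "(vc \<beta>0 (hc (i2 \<delta>1) \<xi>) = vc (hc (i2 \<delta>0) \<xi>) \<beta>1) \<longleftrightarrow>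
    (vc \<xi> (hc (i2 ell) \<beta>1) = vc (hc (i2 ell) \<beta>0) (hc (i2 t) \<xi>))"
proof -
  let ?X = "vc \<beta>0 (hc (i2 \<delta>1) \<xi>)"
  let ?Y = "vc (hc (i2 \<delta>0) \<xi>) \<beta>1"
  have tX: "?X \<in> arr2 A" "src2 A ?X = c1 \<delta>1 h1" "tgt2 A ?X = c1 \<delta>0 h0" using h x b0 b1 by auto
  have tY: "?Y \<in> arr2 A" "src2 A ?Y = c1 \<delta>1 h1" "tgt2 A ?Y = c1 \<delta>0 h0" using h x b0 b1 by auto
  have "hc (i2 ell) ?X = vc (hc (i2 ell) \<beta>0) (hc (i2 ell) (hc (i2 \<delta>1) \<xi>))"
    by (rule whisk_l_vc) (use h x b0 b1 in auto)
  also have "hc (i2 ell) (hc (i2 \<delta>1) \<xi>) = hc (i2 t) \<xi>" using h x by (subst whisk_ll) auto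
  finally have FX: "hc (i2 ell) ?X = vc (hc (i2 ell) \<beta>0) (hc (i2 t) \<xi>)" .
  have "hc (i2 ell) ?Y = vc (hc (i2 ell) (hc (i2 \<delta>0) \<xi>)) (hc (i2 ell) \<beta>1)"
    by (rule whisk_l_vc) (use h x b0 b1 in auto)
  also have "hc (i2 ell) (hc (i2 \<delta>0) \<xi>) = \<xi>" using h x by (subst whisk_ll) auto
  finally have FY: "hc (i2 ell) ?Y = vc \<xi> (hc (i2 ell) \<beta>1)" .
  show ?thesis
  proof
    assume "?X = ?Y" then show "vc \<xi> (hc (i2 ell) \<beta>1) = vc (hc (i2 ell) \<beta>0) (hc (i2 t) \<xi>)"
      using FX FY by simp
  next
    assume "vc \<xi> (hc (i2 ell) \<beta>1) = vc (hc (i2 ell) \<beta>0) (hc (i2 t) \<xi>)"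
    then have "hc (i2 ell) ?X = hc (i2 ell) ?Y" using FX FY by simp
    then show "?X = ?Y" using F_inj[OF h tX tY] by blast
  qed
qed

end


context setting
begin

abbreviation "DO y \<equiv> desc_obj A p \<delta>0 \<delta>1 D0 D1 D2 s0 y"
abbreviation "AO y \<equiv> alg_obj A b t m \<eta> y"
definition "Phi X = (fst X, hc (i2 ell) (snd X))"

lemma desc_alg_obj:
  "(h, \<beta>) \<in> DO y \<longleftrightarrow> h \<in> Hom A y b \<and> \<beta> \<in> Cell A (c1 \<delta>1 h) (c1 \<delta>0 h) \<and> (h, hc (i2 ell) \<beta>) \<in> AO y"
proof (cases "h \<in> Hom A y b \<and> \<beta> \<in> Cell A (c1 \<delta>1 h) (c1 \<delta>0 h)")
  case True
  then have h: "h \<in> arr1 A" "tgt1 A h = b" "src1 A h = y" and be: "\<beta> \<in> arr2 A" "src2 A \<beta> = c1 \<delta>1 h" "tgt2 A \<beta> = c1 \<delta>0 h"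
    by (auto simp: Hom_iff Cell_iff)
  have u: "hc (i2 s0) \<beta> = vc (hc (i2 ell) \<beta>) (hc \<eta> (i2 h))"
    by (rule unit_eq) (use h be in auto)
  show ?thesis using True cocycle_iff[OF h(1,2) be] u F_typ[of h h \<beta>] h be
    unfolding desc_obj_def alg_obj_def by (auto simp: Cell_iff)
qed (auto simp: desc_obj_def)

lemma alg_desc:
  assumes "(h, a) \<in> AO y"
  shows "(h, G h a) \<in> DO y" "hc (i2 ell) (G h a) = a"
proof -
  have h: "h \<in> arr1 A" "tgt1 A h = b" "src1 A h = y" and a: "a \<in> arr2 A" "src2 A a = c1 t h" "tgt2 A a = h"
    using assms by (auto simp: alg_obj_def Hom_iff Cell_iff)
  note fg = FG[of h h a, OF h(1,1,2,2) refl a]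
  show "hc (i2 ell) (G h a) = a" using fg by blast
  show "(h, G h a) \<in> DO y" unfolding desc_alg_obj using fg assms h by (auto simp: Hom_iff Cell_iff)
qed

lemma Phi_bij: "bij_betw Phi (DO y) (AO y)"
  unfolding bij_betw_def
proof
  show "inj_on Phi (DO y)"
  proof (rule inj_onI)
    fix X Y assume X: "X \<in> DO y" and Y: "Y \<in> DO y" and e: "Phi X = Phi Y"
    obtain h \<beta> where Xe: "X = (h, \<beta>)" by (cases X)
    obtain h' \<beta>' where Ye: "Y = (h', \<beta>')" by (cases Y)
    have hh: "h' = h" using e unfolding Xe Ye Phi_def by simp
    have "\<beta> = \<beta>'"
      by (rule F_inj[of h h]) (use X Y e hh in \<open>auto simp: Xe Ye Phi_def desc_obj_def Hom_iff Cell_iff\<close>)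
    then show "X = Y" using Xe Ye hh by simp
  qed
  show "Phi ` DO y = AO y"
  proof
    show "Phi ` DO y \<subseteq> AO y" using desc_alg_obj by (auto simp: Phi_def)
    show "AO y \<subseteq> Phi ` DO y"
    proof
      fix X assume X: "X \<in> AO y"
      obtain h a where Xe: "X = (h, a)" by (cases X)
      have "Phi (h, G h a) = X" using alg_desc X Xe by (simp add: Phi_def)
      then show "X \<in> Phi ` DO y" using alg_desc X Xe by (metis image_eqI)
    qed
  qed
qed

lemma mor_eq:
  assumes "X1 \<in> DO y" "X0 \<in> DO y"
  shows "desc_mor A \<delta>0 \<delta>1 X1 X0 = alg_mor A t (Phi X1) (Phi X0)"
proof -
  obtain h1 \<beta>1 where X1: "X1 = (h1, \<beta>1)" by (cases X1)
  obtain h0 \<beta>0 where X0: "X0 = (h0, \<beta>0)" by (cases X0)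
  have h: "h0 \<in> arr1 A" "h1 \<in> arr1 A" "tgt1 A h0 = b" "tgt1 A h1 = b" "src1 A h0 = src1 A h1"
    and b1: "\<beta>1 \<in> arr2 A" "src2 A \<beta>1 = c1 \<delta>1 h1" "tgt2 A \<beta>1 = c1 \<delta>0 h1"
    and b0: "\<beta>0 \<in> arr2 A" "src2 A \<beta>0 = c1 \<delta>1 h0" "tgt2 A \<beta>0 = c1 \<delta>0 h0"
    using assms unfolding X1 X0 desc_obj_def by (auto simp: Hom_iff Cell_iff)
  show ?thesis
    unfolding X1 X0 desc_mor_def alg_mor_def Phi_def
    using mor_iff[OF h _ _ _ b1 b0] by (auto simp: Cell_iff)
qed

end


context setting
begin

lemma em_to_ld:
  assumes em: "em_object A b t m \<eta> bT u \<mu>"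
  shows "lax_descent_object A p \<delta>0 \<delta>1 D0 D1 D2 s0 bT u (G u \<mu>)"
proof -
  have bT: "bT \<in> obj A" and u: "u \<in> arr1 A" "src1 A u = bT" "tgt1 A u = b"
    and mu: "\<mu> \<in> arr2 A" "src2 A \<mu> = c1 t u" "tgt2 A \<mu> = u"
    and iso: "\<And>y. y \<in> obj A \<Longrightarrow> cat_iso (Hom A y bT) (Cell A) (AO y) (alg_mor A t)
        (\<lambda>g. (c1 u g, hc \<mu> (i2 g))) (\<lambda>\<xi>. hc (i2 u) \<xi>)"
    using em unfolding em_object_def by (auto simp: Hom_iff Cell_iff)
  note fg = FG[of u u \<mu>, OF u(1,1,3,3) refl mu]
  let ?Psi = "G u \<mu>"
  let ?Fa = "\<lambda>g. (c1 u g, hc \<mu> (i2 g))"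
  let ?Fd = "\<lambda>g. (c1 u g, hc ?Psi (i2 g))"
  have PhiFd: "Phi (?Fd g) = ?Fa g" if g: "g \<in> Hom A y bT" for g y
  proof -
    have "hc (i2 ell) (hc ?Psi (i2 g)) = hc (hc (i2 ell) ?Psi) (i2 g)"
      using g fg u by (subst whisk_lr) (auto simp: Hom_iff)
    then show ?thesis using fg by (simp add: Phi_def)
  qed
  have FdDO: "?Fd g \<in> DO y" if y: "y \<in> obj A" and g: "g \<in> Hom A y bT" for g y
  proof -
    have "?Fa g \<in> AO y" using iso[OF y] g unfolding cat_iso_def bij_betw_def by auto
    then have "(c1 u g, hc (i2 ell) (hc ?Psi (i2 g))) \<in> AO y" using PhiFd[OF g] by (simp add: Phi_def)
    then show ?thesis unfolding desc_alg_obj using g u fg by (auto simp: Hom_iff Cell_iff)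
  qed
  show ?thesis unfolding lax_descent_object_def cat_iso_def
  proof (intro conjI ballI)
    show "bT \<in> obj A" "u \<in> Hom A bT b" "?Psi \<in> Cell A (c1 \<delta>1 u) (c1 \<delta>0 u)"
      using bT u fg by (auto simp: Hom_iff Cell_iff)
    fix y assume y: "y \<in> obj A"
    have "bij_betw ?Fa (Hom A y bT) (AO y)" using iso[OF y] unfolding cat_iso_def by blast
    then have "bij_betw (Phi \<circ> ?Fd) (Hom A y bT) (AO y)"
      by (rule bij_betw_cong[THEN iffD1, rotated]) (use PhiFd in auto)
    then show "bij_betw ?Fd (Hom A y bT) (DO y)"
      using bij_betw_comp_iff2[OF Phi_bij, of ?Fd "Hom A y bT"] FdDO[OF y] by blast
    fix g g' assume g: "g \<in> Hom A y bT" and g': "g' \<in> Hom A y bT"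
    have "desc_mor A \<delta>0 \<delta>1 (?Fd g) (?Fd g') = alg_mor A t (?Fa g) (?Fa g')"
      using mor_eq[OF FdDO[OF y g] FdDO[OF y g']] PhiFd[OF g] PhiFd[OF g'] by simp
    then show "bij_betw (hc (i2 u)) (Cell A g g') (desc_mor A \<delta>0 \<delta>1 (?Fd g) (?Fd g'))"
      using iso[OF y] g g' unfolding cat_iso_def by simp
  qed
qed

lemma ld_to_em:
  assumes ld: "lax_descent_object A p \<delta>0 \<delta>1 D0 D1 D2 s0 L d \<Psi>"
  shows "em_object A b t m \<eta> L d (hc (i2 ell) \<Psi>)"
proof -
  have L: "L \<in> obj A" and d: "d \<in> arr1 A" "src1 A d = L" "tgt1 A d = b"
    and ps: "\<Psi> \<in> arr2 A" "src2 A \<Psi> = c1 \<delta>1 d" "tgt2 A \<Psi> = c1 \<delta>0 d"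
    and iso: "\<And>y. y \<in> obj A \<Longrightarrow> cat_iso (Hom A y L) (Cell A) (DO y) (desc_mor A \<delta>0 \<delta>1)
        (\<lambda>g. (c1 d g, hc \<Psi> (i2 g))) (\<lambda>\<xi>. hc (i2 d) \<xi>)"
    using ld unfolding lax_descent_object_def by (auto simp: Hom_iff Cell_iff)
  let ?mu = "hc (i2 ell) \<Psi>"
  let ?Fa = "\<lambda>g. (c1 d g, hc ?mu (i2 g))"
  let ?Fd = "\<lambda>g. (c1 d g, hc \<Psi> (i2 g))"
  have PhiFd: "Phi (?Fd g) = ?Fa g" if g: "g \<in> Hom A y L" for g y
  proof -
    have "hc (i2 ell) (hc \<Psi> (i2 g)) = hc (hc (i2 ell) \<Psi>) (i2 g)"
      using g ps d by (subst whisk_lr) (auto simp: Hom_iff)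
    then show ?thesis by (simp add: Phi_def)
  qed
  show ?thesis unfolding em_object_def cat_iso_def
  proof (intro conjI ballI)
    show "L \<in> obj A" "d \<in> Hom A L b" "?mu \<in> Cell A (c1 t d) d"
      using L d ps by (auto simp: Hom_iff Cell_iff)
    fix y assume y: "y \<in> obj A"
    have FdDO: "?Fd g \<in> DO y" if "g \<in> Hom A y L" for g
      using iso[OF y] that unfolding cat_iso_def bij_betw_def by auto
    have "bij_betw ?Fd (Hom A y L) (DO y)" using iso[OF y] unfolding cat_iso_def by blast
    then have "bij_betw (Phi \<circ> ?Fd) (Hom A y L) (AO y)" using Phi_bij by (rule bij_betw_trans)
    then show "bij_betw ?Fa (Hom A y L) (AO y)"
      by (rule bij_betw_cong[THEN iffD1, rotated]) (use PhiFd in auto)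
    fix g g' assume g: "g \<in> Hom A y L" and g': "g' \<in> Hom A y L"
    have "desc_mor A \<delta>0 \<delta>1 (?Fd g) (?Fd g') = alg_mor A t (?Fa g) (?Fa g')"
      using mor_eq[OF FdDO[OF g] FdDO[OF g']] PhiFd[OF g] PhiFd[OF g'] by simp
    moreover have "bij_betw (hc (i2 d)) (Cell A g g') (desc_mor A \<delta>0 \<delta>1 (?Fd g) (?Fd g'))"
      using iso[OF y] g g' unfolding cat_iso_def by blast
    ultimately show "bij_betw (hc (i2 d)) (Cell A g g') (alg_mor A t (?Fa g) (?Fa g'))"
      by simp
  qed
qed

end


context setting
begin

lemma iso_part:
  assumes em: "em_object A b t m \<eta> bT u \<mu>"
    and pT: "pT \<in> Hom A (src1 A p) bT" "c1 u pT = p" "hc \<mu> (i2 pT) = \<gamma>"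
    and ld: "lax_descent_object A p \<delta>0 \<delta>1 D0 D1 D2 s0 L d \<Psi>"
    and pH: "pH \<in> Hom A (src1 A p) L" "c1 d pH = p" "hc \<Psi> (i2 pH) = \<alpha>"
  shows "\<exists>\<phi>. iso1 A \<phi> L bT \<and> c1 u \<phi> = d \<and> c1 \<phi> pH = pT"
proof -
  have bT: "bT \<in> obj A" and u: "u \<in> arr1 A" "src1 A u = bT" "tgt1 A u = b"
    and mu: "\<mu> \<in> arr2 A" "src2 A \<mu> = c1 t u" "tgt2 A \<mu> = u"
    and isoa: "\<And>y. y \<in> obj A \<Longrightarrow> bij_betw (\<lambda>g. (c1 u g, hc \<mu> (i2 g))) (Hom A y bT) (AO y)"
    using em unfolding em_object_def cat_iso_def by (auto simp: Hom_iff Cell_iff)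
  have L: "L \<in> obj A" and d: "d \<in> arr1 A" "src1 A d = L" "tgt1 A d = b"
    and ps: "\<Psi> \<in> arr2 A" "src2 A \<Psi> = c1 \<delta>1 d" "tgt2 A \<Psi> = c1 \<delta>0 d"
    and isod: "\<And>y. y \<in> obj A \<Longrightarrow> bij_betw (\<lambda>g. (c1 d g, hc \<Psi> (i2 g))) (Hom A y L) (DO y)"
    using ld unfolding lax_descent_object_def cat_iso_def by (auto simp: Hom_iff Cell_iff)
  have pT': "pT \<in> arr1 A" "src1 A pT = src1 A p" "tgt1 A pT = bT" using pT by (auto simp: Hom_iff)
  have pH': "pH \<in> arr1 A" "src1 A pH = src1 A p" "tgt1 A pH = L" using pH by (auto simp: Hom_iff)
  have "(\<lambda>g. (c1 d g, hc \<Psi> (i2 g))) (i1 L) \<in> DO L"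
    using isod[OF L] L unfolding bij_betw_def by (auto simp: Hom_iff)
  then have dPsi: "(d, \<Psi>) \<in> DO L" using d ps L by simp
  then have "Phi (d, \<Psi>) \<in> AO L" using Phi_bij unfolding bij_betw_def by blast
  then have "(d, hc (i2 ell) \<Psi>) \<in> (\<lambda>g. (c1 u g, hc \<mu> (i2 g))) ` Hom A L bT"
    using isoa[OF L] unfolding bij_betw_def by (simp add: Phi_def)
  then obtain \<phi> where phi: "\<phi> \<in> Hom A L bT" "c1 u \<phi> = d" "hc \<mu> (i2 \<phi>) = hc (i2 ell) \<Psi>" by auto
  have phi': "\<phi> \<in> arr1 A" "src1 A \<phi> = L" "tgt1 A \<phi> = bT" using phi by (auto simp: Hom_iff)
  have "(\<lambda>g. (c1 u g, hc \<mu> (i2 g))) (i1 bT) \<in> AO bT"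
    using isoa[OF bT] bT unfolding bij_betw_def by (auto simp: Hom_iff)
  then have umu: "(u, \<mu>) \<in> AO bT" using u mu bT by simp
  have "(u, G u \<mu>) \<in> (\<lambda>g. (c1 d g, hc \<Psi> (i2 g))) ` Hom A bT L"
    using alg_desc(1)[OF umu] isod[OF bT] unfolding bij_betw_def by simp
  then obtain \<psi> where psi: "\<psi> \<in> Hom A bT L" "c1 d \<psi> = u" "hc \<Psi> (i2 \<psi>) = G u \<mu>" by auto
  have psi': "\<psi> \<in> arr1 A" "src1 A \<psi> = bT" "tgt1 A \<psi> = L" using psi by (auto simp: Hom_iff)
  have lG: "hc (i2 ell) (G u \<mu>) = \<mu>" using alg_desc(2)[OF umu] .
  note fg = FG[of u u \<mu>, OF u(1,1,3,3) refl mu]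
  have inja: "inj_on (\<lambda>g. (c1 u g, hc \<mu> (i2 g))) (Hom A y bT)" if "y \<in> obj A" for y
    using isoa[OF that] unfolding bij_betw_def by blast
  have injd: "inj_on (\<lambda>g. (c1 d g, hc \<Psi> (i2 g))) (Hom A y L)" if "y \<in> obj A" for y
    using isod[OF that] unfolding bij_betw_def by blast
  have a1: "c1 u (c1 \<phi> \<psi>) = u"
    using c1_assoc[of \<psi> \<phi> u] phi' psi' u phi(2) psi(2) by (simp del: c1_assoc)
  have "hc \<mu> (i2 (c1 \<phi> \<psi>)) = hc (hc \<mu> (i2 \<phi>)) (i2 \<psi>)"
    using phi' psi' mu u by (subst whisk_rr) auto
  also have "\<dots> = hc (i2 ell) (hc \<Psi> (i2 \<psi>))" unfolding phi(3)
    using ps psi' d by (subst whisk_lr) auto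
  finally have a2: "hc \<mu> (i2 (c1 \<phi> \<psi>)) = \<mu>" using psi(3) lG by simp
  have pp: "c1 \<phi> \<psi> = i1 bT"
    by (rule inj_onD[OF inja[OF bT]]) (use a1 a2 u mu bT phi' psi' in \<open>auto simp: Hom_iff\<close>)
  have b1: "c1 d (c1 \<psi> \<phi>) = d"
    using c1_assoc[of \<phi> \<psi> d] phi' psi' d phi(2) psi(2) by (simp del: c1_assoc)
  have "hc \<Psi> (i2 (c1 \<psi> \<phi>)) = hc (hc \<Psi> (i2 \<psi>)) (i2 \<phi>)"
    using phi' psi' ps d by (subst whisk_rr) auto
  also have "\<dots> = \<Psi>"
  proof (rule F_inj[of d d])
    have ud: "c1 \<delta>1 (c1 u \<phi>) = c1 \<delta>1 d" "c1 \<delta>0 (c1 u \<phi>) = c1 \<delta>0 d" using phi(2) by auto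
    show "hc (hc \<Psi> (i2 \<psi>)) (i2 \<phi>) \<in> arr2 A" "src2 A (hc (hc \<Psi> (i2 \<psi>)) (i2 \<phi>)) = c1 \<delta>1 d"
      "tgt2 A (hc (hc \<Psi> (i2 \<psi>)) (i2 \<phi>)) = c1 \<delta>0 d"
      unfolding psi(3) using fg phi' u ud by auto
    have "hc (i2 ell) (hc (hc \<Psi> (i2 \<psi>)) (i2 \<phi>)) = hc (hc (i2 ell) (G u \<mu>)) (i2 \<phi>)"
      unfolding psi(3) using fg phi' u by (subst whisk_lr) auto
    then show "hc (i2 ell) (hc (hc \<Psi> (i2 \<psi>)) (i2 \<phi>)) = hc (i2 ell) \<Psi>" using lG phi(3) by simp
  qed (use d ps in auto)
  finally have b2: "hc \<Psi> (i2 (c1 \<psi> \<phi>)) = \<Psi>" .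
  have qq: "c1 \<psi> \<phi> = i1 L"
    by (rule inj_onD[OF injd[OF L]]) (use b1 b2 d ps L phi' psi' in \<open>auto simp: Hom_iff\<close>)
  have c1': "c1 u (c1 \<phi> pH) = p"
    using c1_assoc[of pH \<phi> u] phi' pH' u phi(2) pH(2) by (simp del: c1_assoc)
  have "hc \<mu> (i2 (c1 \<phi> pH)) = hc (hc \<mu> (i2 \<phi>)) (i2 pH)"
    using phi' pH' mu u by (subst whisk_rr) auto
  also have "\<dots> = hc (i2 ell) (hc \<Psi> (i2 pH))" unfolding phi(3)
    using ps pH' d by (subst whisk_lr) auto
  finally have c2: "hc \<mu> (i2 (c1 \<phi> pH)) = \<gamma>" using pH(3) by simp
  have pp2: "c1 \<phi> pH = pT"
    by (rule inj_onD[OF inja[of "src1 A p"]]) (use c1' c2 pT pT' phi' pH' in \<open>auto simp: Hom_iff\<close>)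
  show ?thesis
    using phi pp qq pp2 psi unfolding iso1_def by blast
qed

lemma main:
  "((\<exists>bT u \<mu>. em_object A (tgt1 A p) t m \<eta> bT u \<mu>) \<longleftrightarrow>
          (\<exists>L d \<Psi>. lax_descent_object A p \<delta>0 \<delta>1 D0 D1 D2 s0 L d \<Psi>)) \<and>
         (\<forall>bT u \<mu> pT L d \<Psi> pH.
            em_object A (tgt1 A p) t m \<eta> bT u \<mu> \<and>
            pT \<in> Hom A (src1 A p) bT \<and> comp1 A u pT = p \<and> hcomp A \<mu> (ident2 A pT) = \<gamma> \<and>
            lax_descent_object A p \<delta>0 \<delta>1 D0 D1 D2 s0 L d \<Psi> \<and>
            pH \<in> Hom A (src1 A p) L \<and> comp1 A d pH = p \<and> hcomp A \<Psi> (ident2 A pH) = \<alpha>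
          \<longrightarrow> (\<exists>\<phi>. iso1 A \<phi> L bT \<and> comp1 A u \<phi> = d \<and> comp1 A \<phi> pH = pT))"
  using em_to_ld ld_to_em iso_part by blast

end


theorem theorem4p8:
  fixes A :: "('o, 'a, 'c, 'z) two_cat_scheme"
  assumes "two_category A"
    and "p \<in> arr1 A"
    and "cokernel_diagram A p C \<delta>0 \<delta>1 \<alpha> P D0 D1 D2 s0"
    and "is_right_kan A p p t \<gamma>"
    and "preserves_right_kan A \<delta>0 p p t \<gamma>"
    and "codensity_monad A p t \<gamma> m \<eta>"
  shows "((\<exists>bT u \<mu>. em_object A (tgt1 A p) t m \<eta> bT u \<mu>) \<longleftrightarrow>
          (\<exists>L d \<Psi>. lax_descent_object A p \<delta>0 \<delta>1 D0 D1 D2 s0 L d \<Psi>)) \<and>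
         (\<forall>bT u \<mu> pT L d \<Psi> pH.
            em_object A (tgt1 A p) t m \<eta> bT u \<mu> \<and>
            pT \<in> Hom A (src1 A p) bT \<and> comp1 A u pT = p \<and> hcomp A \<mu> (ident2 A pT) = \<gamma> \<and>
            lax_descent_object A p \<delta>0 \<delta>1 D0 D1 D2 s0 L d \<Psi> \<and>
            pH \<in> Hom A (src1 A p) L \<and> comp1 A d pH = p \<and> hcomp A \<Psi> (ident2 A pH) = \<alpha>
          \<longrightarrow> (\<exists>\<phi>. iso1 A \<phi> L bT \<and> comp1 A u \<phi> = d \<and> comp1 A \<phi> pH = pT))"
proof -
  interpret setting A p C \<delta>0 \<delta>1 \<alpha> P D0 D1 D2 s0 t \<gamma> m \<eta>
    using assms by (unfold_locales) auto
  show ?thesis by (rule main)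
qed

end
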